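(* Let $D,\widetilde D,K,\widetilde K$ be nonempty sets, $\emptyset\ne F\subseteq\mathcal{F}(D,K)$, $\emptyset\ne\widetilde F\subseteq\mathcal{F}(\widetilde D,\widetilde K)$, and let $\Gamma:F\to\widetilde F$ be a mapping for which there exist $\kappa,m^*\in\mathbb{N}$ and mappings $\eta_j:\widetilde D\to D$ ($j=0,\dots,\kappa-1$), $\beta:K\to\mathbb{Z}[0,2^{m^*})$, $\rho:\widetilde D\times\mathbb{Z}[0,2^{m^*})^\kappa\to\widetilde K$ such that for all $f\in F$, $s\in\widetilde D$, $(\Gamma(f))(s)=\rho(s,\beta(f(\eta_0(s))),\dots,\beta(f(\eta_{\kappa-1}(s))))$. Let $G$ be a normed space and $\widetilde A$ a quantum algorithm from $\widetilde F$ to $G$. Then there is a quantum algorithm $A$ from $F$ to $G$ with $n_q(A)=2\kappa\,n_q(\widetilde A)$ and $A(f)=\widetilde A(\Gamma(f))$ for all $f\in F$. Consequently, if $\widetilde S:\widetilde F\to G$ is any mapping and $S=\widetilde S\circ\Gamma$, then for each $n\in\mathbb{N}_0$, $e^q_{2\kappa n}(S,F)\le e^q_n(\widetilde S,\widetilde F)$.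
   Context: For nonempty sets $D',K'$, $\mathcal{F}(D',K')$ is the set of all functions $D'\to K'$; $\mathbb{Z}[0,N)=\{0,\dots,N-1\}$. $H_m=(\mathbb{C}^2)^{\otimes m}$ has canonical basis $|i\rangle$, $i\in\mathbb{Z}[0,2^m)$, where $|i\rangle=e_{j_0}\otimes\cdots\otimes e_{j_{m-1}}$ with $i=\sum_k j_k2^{m-1-k}$. For nonempty $F\subseteq\mathcal{F}(D',K')$, a quantum query on $F$ is a tuple $Q=(m,m',m'',Z,\tau,\beta)$ with $m,m',m''\in\mathbb{N}$, $m'+m''\le m$, $\emptyset\ne Z\subseteq\mathbb{Z}[0,2^{m'})$, $\tau:Z\to D'$, $\beta:K'\to\mathbb{Z}[0,2^{m''})$; $m(Q)=m$. For $f\in F$, $Q_f$ is the unitary on $H_m=H_{m'}\otimes H_{m''}\otimes H_{m-m'-m''}$ with $Q_f|i\rangle|x\rangle|y\rangle=|i\rangle|x\oplus\beta(f(\tau(i)))\rangle|y\rangle$ if $i\in Z$ and $=|i\rangle|x\rangle|y\rangle$ otherwise ($\oplus$ = addition mod $2^{m''}$). A quantum algorithm on $F$ with no measurement is $A=(Q,(U_j)_{j=0}^n)$, $n\in\mathbb{N}_0$, $U_j$ unitary on $H_{m(Q)}$; $A_f=U_nQ_fU_{n-1}\cdots U_1Q_fU_0$, $n_q(A)=n$, $m(A)=m(Q)$, and $A_f(x,y)$ denotes the matrix entries in the canonical basis. For a normed space $G$ over $\mathbb{R}$ or $\mathbb{C}$, a quantum algorithm from $F$ to $G$ (with $k\in\mathbb{N}$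 measurements) is $A=((A_\ell)_{\ell=0}^{k-1},(b_\ell)_{\ell=0}^{k-1},\varphi)$ with $A_\ell$ algorithms on $F$ with no measurement, $m_\ell=m(A_\ell)$, $b_0\in\mathbb{Z}[0,2^{m_0})$, $b_\ell:\prod_{i<\ell}\mathbb{Z}[0,2^{m_i})\to\mathbb{Z}[0,2^{m_\ell})$, $\varphi:\prod_{\ell<k}\mathbb{Z}[0,2^{m_\ell})\to G$. Its output at $f$ is the probability measure $A(f)(C)=\sum_{\varphi(x_0,\dots,x_{k-1})\in C}\prod_{\ell=0}^{k-1}|A_{\ell,f}(x_\ell,b_\ell(x_0,\dots,x_{\ell-1}))|^2$; $n_q(A)=\sum_\ell n_q(A_\ell)$. For $S:F\to G$, $\theta\ge0$: $e(S,A,f,\theta)=\inf\{\varepsilon\ge0: \mathbf{P}\{\|S(f)-\zeta\|>\varepsilon\}\le\theta\}$ with $\zeta$ a random variable with distribution $A(f)$; $e(S,A,F,\theta)=\sup_{f\in F}e(S,A,f,\theta)$ (possibly $+\infty$); $e_n^q(S,F,\theta)=\inf\{e(S,A,F,\theta): A$ a quantum algorithm from $F$ to $G$ with $n_q(A)\le n\}$; $e_n^q(S,F)=e_n^q(S,F,1/4)$. *)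

theory Defs
  imports Complex_Main "HOL-Library.Extended_Real"
begin

text \<open>The sets D', K' of the paper are represented by the (nonempty) types
 'd, 'k; a function D' -> K' is a HOL function of type 'd => 'k.
 Linear operators on H_m are represented by their matrices in the canonical basis,
 as functions nat => nat => complex (row index, column index), only entries with
 indices in Z[0,2^m) being relevant. The matrix entry A(x,y) is the entry in row x,
 column y, i.e. the coefficient of |x> in A|y>.\<close>

type_synonym cmat = "nat \<Rightarrow> nat \<Rightarrow> complex"

definition mmul :: "nat \<Rightarrow> cmat \<Rightarrow> cmat \<Rightarrow> cmat" where
  "mmul m A B = (\<lambda>i j. \<Sum>k<2^m. A i k * B k j)"

definition unitary_op :: "nat \<Rightarrow> cmat \<Rightarrow> bool" where
  "unitary_op m U \<longleftrightarrow>
     (\<forall>i<2^m. \<forall>j<2^m. (\<Sum>k<2^m. cnj (U k i) * U k j) = (if i = j then 1 else 0))"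

record ('d, 'k) query =
  qm :: nat
  qm1 :: nat
  qm2 :: nat
  qZ :: "nat set"
  qtau :: "nat \<Rightarrow> 'd"
  qbeta :: "'k \<Rightarrow> nat"

definition query_valid :: "('d, 'k) query \<Rightarrow> bool" where
  "query_valid Q \<longleftrightarrow> qm Q \<ge> 1 \<and> qm1 Q \<ge> 1 \<and> qm2 Q \<ge> 1 \<and> qm1 Q + qm2 Q \<le> qm Q
     \<and> qZ Q \<noteq> {} \<and> qZ Q \<subseteq> {..<2 ^ qm1 Q} \<and> (\<forall>k. qbeta Q k < 2 ^ qm2 Q)"

text \<open>Basis map of Q_f: |i>|x>|y> |-> |i>|x (+) beta(f(tau i))>|y> if i in Z, identity otherwise.
  With |b> big-endian, i = b div 2^(m-m'), x = (b div 2^r) mod 2^m'', y = b mod 2^r,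
  where r = m - m' - m''.\<close>
definition query_map :: "('d, 'k) query \<Rightarrow> ('d \<Rightarrow> 'k) \<Rightarrow> nat \<Rightarrow> nat" where
  "query_map Q f b =
     (let m = qm Q; m1 = qm1 Q; m2 = qm2 Q; r = m - m1 - m2;
          i = b div 2 ^ (m - m1); x = (b div 2 ^ r) mod 2 ^ m2; y = b mod 2 ^ r
      in if i \<in> qZ Q then i * 2 ^ (m - m1) + ((x + qbeta Q (f (qtau Q i))) mod 2 ^ m2) * 2 ^ r + y
         else b)"

definition query_op :: "('d, 'k) query \<Rightarrow> ('d \<Rightarrow> 'k) \<Rightarrow> cmat" where
  "query_op Q f = (\<lambda>a b. if a = query_map Q f b then 1 else 0)"

record ('d, 'k) nmalg =
  nquery :: "('d, 'k) query"
  nops :: "cmat list"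

definition nmalg_valid :: "('d, 'k) nmalg \<Rightarrow> bool" where
  "nmalg_valid A \<longleftrightarrow> query_valid (nquery A) \<and> nops A \<noteq> []
     \<and> (\<forall>U \<in> set (nops A). unitary_op (qm (nquery A)) U)"

definition nmalg_m :: "('d, 'k) nmalg \<Rightarrow> nat" where
  "nmalg_m A = qm (nquery A)"

definition nmalg_nq :: "('d, 'k) nmalg \<Rightarrow> nat" where
  "nmalg_nq A = length (nops A) - 1"

fun run_ops :: "nat \<Rightarrow> cmat \<Rightarrow> cmat \<Rightarrow> cmat list \<Rightarrow> cmat" where
  "run_ops m Qf M [] = M"
| "run_ops m Qf M (U # Us) = run_ops m Qf (mmul m U (mmul m Qf M)) Us"

definition nmalg_op :: "('d, 'k) nmalg \<Rightarrow> ('d \<Rightarrow> 'k) \<Rightarrow> cmat" where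
  "nmalg_op A f = run_ops (nmalg_m A) (query_op (nquery A) f) (hd (nops A)) (tl (nops A))"

text \<open>Quantum algorithm from F to G with k measurements:
  steps = [(A_0, b_0), ..., (A_{k-1}, b_{k-1})], where b_l is applied to the list of the
  previous outcomes [x_0, ..., x_{l-1}] (so b_0 is the constant b_0 []), and phi.\<close>
record ('d, 'k, 'g) qalg =
  qsteps :: "(('d, 'k) nmalg \<times> (nat list \<Rightarrow> nat)) list"
  qphi :: "nat list \<Rightarrow> 'g"

definition qalg_k :: "('d, 'k, 'g) qalg \<Rightarrow> nat" where
  "qalg_k A = length (qsteps A)"

definition qalg_mm :: "('d, 'k, 'g) qalg \<Rightarrow> nat \<Rightarrow> nat" where
  "qalg_mm A l = nmalg_m (fst (qsteps A ! l))"

definition outcomes :: "('d, 'k, 'g) qalg \<Rightarrow> nat \<Rightarrow> nat list set" where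
  "outcomes A l = {xs. length xs = l \<and> (\<forall>i<l. xs ! i < 2 ^ qalg_mm A i)}"

definition qalg_valid :: "('d, 'k, 'g) qalg \<Rightarrow> bool" where
  "qalg_valid A \<longleftrightarrow> qalg_k A \<ge> 1
     \<and> (\<forall>l<qalg_k A. nmalg_valid (fst (qsteps A ! l)))
     \<and> (\<forall>l<qalg_k A. \<forall>xs \<in> outcomes A l. snd (qsteps A ! l) xs < 2 ^ qalg_mm A l)"

definition qalg_nq :: "('d, 'k, 'g) qalg \<Rightarrow> nat" where
  "qalg_nq A = (\<Sum>l<qalg_k A. nmalg_nq (fst (qsteps A ! l)))"

definition outcome_prob :: "('d, 'k, 'g) qalg \<Rightarrow> ('d \<Rightarrow> 'k) \<Rightarrow> nat list \<Rightarrow> real" where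
  "outcome_prob A f xs =
     (\<Prod>l<qalg_k A. (cmod (nmalg_op (fst (qsteps A ! l)) f (xs ! l) (snd (qsteps A ! l) (take l xs))))\<^sup>2)"

text \<open>The output A(f) as a (finitely supported) probability measure on G, given on all subsets C.\<close>
definition qalg_out :: "('d, 'k, 'g) qalg \<Rightarrow> ('d \<Rightarrow> 'k) \<Rightarrow> 'g set \<Rightarrow> real" where
  "qalg_out A f C = (\<Sum>xs \<in> outcomes A (qalg_k A). if qphi A xs \<in> C then outcome_prob A f xs else 0)"

definition err_pt :: "(('d \<Rightarrow> 'k) \<Rightarrow> 'g::real_normed_vector) \<Rightarrow> ('d, 'k, 'g) qalg \<Rightarrow> ('d \<Rightarrow> 'k) \<Rightarrow> real \<Rightarrow> ereal" where
  "err_pt S A f \<theta> = Inf {ereal \<epsilon> | \<epsilon>. \<epsilon> \<ge> 0 \<and> qalg_out A f {\<zeta>. norm (S f - \<zeta>) > \<epsilon>} \<le> \<theta>}"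

definition err :: "(('d \<Rightarrow> 'k) \<Rightarrow> 'g::real_normed_vector) \<Rightarrow> ('d, 'k, 'g) qalg \<Rightarrow> ('d \<Rightarrow> 'k) set \<Rightarrow> real \<Rightarrow> ereal" where
  "err S A F \<theta> = (SUP f\<in>F. err_pt S A f \<theta>)"

definition eq_theta :: "nat \<Rightarrow> (('d \<Rightarrow> 'k) \<Rightarrow> 'g::real_normed_vector) \<Rightarrow> ('d \<Rightarrow> 'k) set \<Rightarrow> real \<Rightarrow> ereal" where
  "eq_theta n S F \<theta> = (INF A \<in> {A :: ('d, 'k, 'g) qalg. qalg_valid A \<and> qalg_nq A \<le> n}. err S A F \<theta>)"

definition qerr :: "nat \<Rightarrow> (('d \<Rightarrow> 'k) \<Rightarrow> 'g::real_normed_vector) \<Rightarrow> ('d \<Rightarrow> 'k) set \<Rightarrow> ereal" where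
  "qerr n S F = eq_theta n S F (1/4)"

end

theory Submission
  imports Defs
begin

definition perm_op :: "(nat \<Rightarrow> nat) \<Rightarrow> cmat" where
  "perm_op p = (\<lambda>a b. if a = p b then 1 else 0)"

lemma query_op_perm: "query_op Q f = perm_op (query_map Q f)"
  by (simp add: query_op_def perm_op_def)

lemma mmul_perm_apply:
  "mmul M (perm_op p) X a c = (\<Sum>k<2^M. if a = p k then X k c else 0)"
  unfolding mmul_def perm_op_def by (intro sum.cong) auto

lemma mmul_perm_perm:
  assumes "\<forall>n<2^M. \<pi> n < (2::nat)^M"
  shows "mmul M (perm_op p) (mmul M (perm_op \<pi>) X) = mmul M (perm_op (p \<circ> \<pi>)) X"
proof (intro ext)
  fix a c
  have "mmul M (perm_op p) (mmul M (perm_op \<pi>) X) a c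
      = (\<Sum>k<2^M. \<Sum>l<2^M. if a = p k \<and> k = \<pi> l then X l c else 0)"
    unfolding mmul_perm_apply by (intro sum.cong) (auto simp: sum.If_cases)
  also have "\<dots> = (\<Sum>l<2^M. \<Sum>k<2^M. if a = p k \<and> k = \<pi> l then X l c else 0)"
    by (rule sum.swap)
  also have "\<dots> = (\<Sum>l<2^M. if a = p (\<pi> l) then X l c else 0)"
  proof (intro sum.cong refl)
    fix l assume "l \<in> {..<(2::nat)^M}"
    then have lt: "\<pi> l < 2^M" using assms by auto
    have "(\<Sum>k<2^M. if a = p k \<and> k = \<pi> l then X l c else 0)
        = (\<Sum>k<2^M. if k = \<pi> l then (if a = p k then X l c else 0) else 0)"
      by (intro sum.cong) auto
    also have "\<dots> = (if a = p (\<pi> l) then X l c else 0)"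
      using lt by (simp add: sum.delta')
    finally show "(\<Sum>k<2^M. if a = p k \<and> k = \<pi> l then X l c else 0) = (if a = p (\<pi> l) then X l c else 0)" .
  qed
  also have "\<dots> = mmul M (perm_op (p \<circ> \<pi>)) X a c"
    unfolding mmul_perm_apply by simp
  finally show "mmul M (perm_op p) (mmul M (perm_op \<pi>) X) a c = mmul M (perm_op (p \<circ> \<pi>)) X a c" .
qed

lemma unitary_perm:
  assumes "\<forall>n<2^M. p n < (2::nat)^M" "inj_on p {..<2^M}"
  shows "unitary_op M (perm_op p)"
  unfolding unitary_op_def
proof (intro allI impI)
  fix i j :: nat assume ij: "i < 2^M" "j < 2^M"
  have "(\<Sum>k<2^M. cnj (perm_op p k i) * perm_op p k j) = (\<Sum>k<2^M. if k = p i then (if p i = p j then 1 else 0) else 0)"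
    unfolding perm_op_def by (intro sum.cong) auto
  also have "\<dots> = (if p i = p j then 1 else 0)" using assms(1) ij by (simp add: sum.delta')
  also have "\<dots> = (if i = j then 1 else 0)" using assms(2) ij by (auto simp: inj_on_def)
  finally show "(\<Sum>k<2^M. cnj (perm_op p k i) * perm_op p k j) = (if i = j then 1 else 0)" .
qed

lemma run_ops_append: "run_ops m Qf X (xs @ ys) = run_ops m Qf (run_ops m Qf X xs) ys"
  by (induction xs arbitrary: X) auto

fun cq :: "(nat \<Rightarrow> nat) \<Rightarrow> (nat \<Rightarrow> nat) \<Rightarrow> (nat \<Rightarrow> nat) list \<Rightarrow> (nat \<Rightarrow> nat)" where
  "cq q \<pi> [] = \<pi>"
| "cq q \<pi> (p # ps) = cq q (p \<circ> q \<circ> \<pi>) ps"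

lemma run_ops_perm_gen:
  assumes "\<forall>n<2^M. q n < (2::nat)^M" "\<forall>p\<in>set ps. \<forall>n<2^M. p n < (2::nat)^M"
    "\<forall>n<2^M. \<pi> n < (2::nat)^M"
  shows "run_ops M (perm_op q) (mmul M (perm_op \<pi>) X) (map perm_op ps) = mmul M (perm_op (cq q \<pi> ps)) X"
  using assms(2,3)
proof (induction ps arbitrary: \<pi>)
  case Nil
  then show ?case by simp
next
  case (Cons p ps)
  have qpi: "\<forall>n<2^M. (q \<circ> \<pi>) n < (2::nat)^M" using Cons.prems assms(1) by auto
  have "mmul M (perm_op p) (mmul M (perm_op q) (mmul M (perm_op \<pi>) X)) = mmul M (perm_op (p \<circ> q \<circ> \<pi>)) X"
  proof -
    have "mmul M (perm_op q) (mmul M (perm_op \<pi>) X) = mmul M (perm_op (q \<circ> \<pi>)) X"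
      by (rule mmul_perm_perm[OF Cons.prems(2)])
    moreover have "mmul M (perm_op p) (mmul M (perm_op (q \<circ> \<pi>)) X) = mmul M (perm_op (p \<circ> (q \<circ> \<pi>))) X"
      by (rule mmul_perm_perm[OF qpi])
    ultimately show ?thesis by (simp only: comp_assoc)
  qed
  moreover have "\<forall>n<2^M. (p \<circ> q \<circ> \<pi>) n < (2::nat)^M" using Cons.prems qpi by auto
  ultimately show ?case using Cons by simp
qed

lemma run_ops_perm:
  assumes "\<forall>n<2^M. q n < (2::nat)^M" "\<forall>p\<in>set ps. \<forall>n<2^M. p n < (2::nat)^M" "ps \<noteq> []"
  shows "run_ops M (perm_op q) X (map perm_op ps) = mmul M (perm_op (cq q id ps)) X"
proof -
  obtain p ps' where ps: "ps = p # ps'" using assms(3) by (cases ps) auto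
  have "run_ops M (perm_op q) X (map perm_op ps) = run_ops M (perm_op q) (mmul M (perm_op (p \<circ> q)) X) (map perm_op ps')"
    using ps mmul_perm_perm[OF assms(1)] by simp
  also have "\<dots> = mmul M (perm_op (cq q (p \<circ> q) ps')) X"
    using assms ps by (intro run_ops_perm_gen) auto
  finally show ?thesis using ps by simp
qed


definition extm :: "nat \<Rightarrow> (nat \<Rightarrow> nat) \<Rightarrow> (nat \<Rightarrow> nat) \<Rightarrow> cmat \<Rightarrow> cmat" where
  "extm m emb unemb U = (\<lambda>a c. if a \<in> emb ` {..<2^m} \<and> c \<in> emb ` {..<2^m} then U (unemb a) (unemb c)
      else if a = c then 1 else 0)"

definition rep :: "nat \<Rightarrow> nat \<Rightarrow> (nat \<Rightarrow> nat) \<Rightarrow> cmat \<Rightarrow> cmat \<Rightarrow> bool" where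
  "rep m M emb X Xt \<longleftrightarrow> (\<forall>x<2^m. \<forall>b<2^m. X (emb x) (emb b) = Xt x b)
     \<and> (\<forall>a<2^M. a \<notin> emb ` {..<2^m} \<longrightarrow> (\<forall>b<2^m. X a (emb b) = 0))"

locale emb_ctx =
  fixes m M :: nat and emb unemb :: "nat \<Rightarrow> nat"
  assumes emb_lt: "\<And>y. y < 2^m \<Longrightarrow> emb y < 2^M"
    and unemb_emb: "\<And>y. y < 2^m \<Longrightarrow> unemb (emb y) = y"
begin

lemma inj_emb: "inj_on emb {..<2^m}"
  by (metis inj_onI lessThan_iff unemb_emb)

lemma emb_eq_iff: "x < 2^m \<Longrightarrow> y < 2^m \<Longrightarrow> emb x = emb y \<longleftrightarrow> x = y"
  by (metis unemb_emb)

lemma sum_emb: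
  fixes F :: "nat \<Rightarrow> 'a::comm_monoid_add"
  assumes "\<And>k. k < 2^M \<Longrightarrow> k \<notin> emb ` {..<2^m} \<Longrightarrow> F k = 0"
  shows "(\<Sum>k<2^M. F k) = (\<Sum>y<2^m. F (emb y))"
proof -
  have sub: "emb ` {..<2^m} \<subseteq> {..<2^M}" using emb_lt by auto
  have "(\<Sum>k<2^M. F k) = (\<Sum>k\<in>emb ` {..<2^m}. F k)"
    using sub assms by (intro sum.mono_neutral_right) auto
  also have "\<dots> = (\<Sum>y<2^m. F (emb y))"
    using inj_emb by (simp add: sum.reindex)
  finally show ?thesis .
qed

lemma extm_emb: "x < 2^m \<Longrightarrow> y < 2^m \<Longrightarrow> extm m emb unemb U (emb x) (emb y) = U x y"
  unfolding extm_def by (auto simp: unemb_emb)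

lemma extm_out1: "a \<notin> emb ` {..<2^m} \<Longrightarrow> extm m emb unemb U a c = (if a = c then 1 else 0)"
  unfolding extm_def by auto

lemma extm_out2: "c \<notin> emb ` {..<2^m} \<Longrightarrow> extm m emb unemb U a c = (if a = c then 1 else 0)"
  unfolding extm_def by auto

lemma unitary_extm:
  assumes U: "unitary_op m U"
  shows "unitary_op M (extm m emb unemb U)"
  unfolding unitary_op_def
proof (intro allI impI)
  fix i j :: nat assume ij: "i < 2^M" "j < 2^M"
  let ?E = "extm m emb unemb U"
  let ?R = "emb ` {..<2^m}"
  show "(\<Sum>k<2^M. cnj (?E k i) * ?E k j) = (if i = j then 1 else 0)"
  proof (cases "i \<in> ?R")
    case False
    have "(\<Sum>k<2^M. cnj (?E k i) * ?E k j) = (\<Sum>k<2^M. if k = i then ?E i j else 0)"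
      using False by (intro sum.cong) (auto simp: extm_out2)
    also have "\<dots> = ?E i j" using ij by (simp add: sum.delta')
    also have "\<dots> = (if i = j then 1 else 0)" using False by (simp add: extm_out1)
    finally show ?thesis .
  next
    case iR: True
    then obtain i' where i': "i' < 2^m" "i = emb i'" by auto
    show ?thesis
    proof (cases "j \<in> ?R")
      case False
      have "(\<Sum>k<2^M. cnj (?E k i) * ?E k j) = (\<Sum>k<2^M. if k = j then cnj (?E j i) else 0)"
        using False by (intro sum.cong) (auto simp: extm_out2)
      also have "\<dots> = cnj (?E j i)" using ij by (simp add: sum.delta')
      also have "\<dots> = 0" using False iR by (auto simp: extm_out1)
      finally show ?thesis using False iR by auto
    next
      case True
      then obtain j' where j': "j' < 2^m" "j = emb j'" by auto
      have "(\<Sum>k<2^M. cnj (?E k i) * ?E k j) = (\<Sum>y<2^m. cnj (?E (emb y) i) * ?E (emb y) j)"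
        using iR by (intro sum_emb) (auto simp: extm_out1)
      also have "\<dots> = (\<Sum>y<2^m. cnj (U y i') * U y j')"
        using i' j' by (intro sum.cong) (auto simp: extm_emb)
      also have "\<dots> = (if i' = j' then 1 else 0)" using U i' j' unfolding unitary_op_def by auto
      also have "\<dots> = (if i = j then 1 else 0)" using i' j' emb_eq_iff by auto
      finally show ?thesis .
    qed
  qed
qed

lemma rep_init: "rep m M emb (extm m emb unemb U) U"
  unfolding rep_def by (auto simp: extm_emb extm_out1)

lemma rep_ext:
  assumes "rep m M emb X Xt"
  shows "rep m M emb (mmul M (extm m emb unemb U) X) (mmul m U Xt)"
proof -
  have col: "mmul M (extm m emb unemb U) X a (emb b) = (\<Sum>y<2^m. extm m emb unemb U a (emb y) * Xt y b)"
    if "b < 2^m" for a b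
  proof -
    have "mmul M (extm m emb unemb U) X a (emb b) = (\<Sum>k<2^M. extm m emb unemb U a k * X k (emb b))"
      by (simp add: mmul_def)
    also have "\<dots> = (\<Sum>y<2^m. extm m emb unemb U a (emb y) * X (emb y) (emb b))"
      using assms that unfolding rep_def by (intro sum_emb) auto
    also have "\<dots> = (\<Sum>y<2^m. extm m emb unemb U a (emb y) * Xt y b)"
      using assms that unfolding rep_def by (intro sum.cong) auto
    finally show ?thesis .
  qed
  show ?thesis unfolding rep_def
  proof (intro conjI allI impI)
    fix x b :: nat assume xb: "x < 2^m" "b < 2^m"
    show "mmul M (extm m emb unemb U) X (emb x) (emb b) = mmul m U Xt x b"
      unfolding col[OF xb(2)] using xb by (simp add: mmul_def extm_emb)
  next
    fix a b :: nat assume "a < 2^M" "a \<notin> emb ` {..<2^m}" "b < 2^m"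
    then show "mmul M (extm m emb unemb U) X a (emb b) = 0"
      by (simp add: col extm_out1) (intro sum.neutral, auto)
  qed
qed

lemma rep_perm:
  assumes "rep m M emb X Xt" "\<forall>n<2^M. \<pi> n < (2::nat)^M"
    "\<forall>y<2^m. \<pi> (emb y) = emb (\<sigma> y)" "\<forall>y<2^m. \<sigma> y < (2::nat)^m"
  shows "rep m M emb (mmul M (perm_op \<pi>) X) (mmul m (perm_op \<sigma>) Xt)"
proof -
  have col: "mmul M (perm_op \<pi>) X a (emb b) = (\<Sum>y<2^m. if a = emb (\<sigma> y) then Xt y b else 0)"
    if "b < 2^m" for a b
  proof -
    have "mmul M (perm_op \<pi>) X a (emb b) = (\<Sum>k<2^M. if a = \<pi> k then X k (emb b) else 0)"
      by (simp add: mmul_perm_apply)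
    also have "\<dots> = (\<Sum>y<2^m. if a = \<pi> (emb y) then X (emb y) (emb b) else 0)"
      using assms that unfolding rep_def by (intro sum_emb) auto
    also have "\<dots> = (\<Sum>y<2^m. if a = emb (\<sigma> y) then Xt y b else 0)"
      using assms that unfolding rep_def by (intro sum.cong) auto
    finally show ?thesis .
  qed
  show ?thesis unfolding rep_def
  proof (intro conjI allI impI)
    fix x b :: nat assume xb: "x < 2^m" "b < 2^m"
    have "(\<Sum>y<2^m. if emb x = emb (\<sigma> y) then Xt y b else 0) = (\<Sum>y<2^m. if x = \<sigma> y then Xt y b else 0)"
      using xb assms(4) emb_eq_iff by (intro sum.cong) auto
    then show "mmul M (perm_op \<pi>) X (emb x) (emb b) = mmul m (perm_op \<sigma>) Xt x b"
      unfolding col[OF xb(2)] by (simp add: mmul_perm_apply)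
  next
    fix a b :: nat assume "a < 2^M" "a \<notin> emb ` {..<2^m}" "b < 2^m"
    then show "mmul M (perm_op \<pi>) X a (emb b) = 0"
      using assms(4) by (simp add: col) (intro sum.neutral, auto)
  qed
qed

end


lemma pair_lt:
  fixes h l :: nat
  assumes "h < 2^a" "l < 2^b"
  shows "h * 2^b + l < 2^(a+b)"
proof -
  have "h * 2^b + l < (h + 1) * 2^b" using assms(2) by simp
  also have "\<dots> \<le> 2^a * 2^b" using assms(1) by (intro mult_le_mono1) simp
  finally show ?thesis by (simp add: power_add)
qed

lemma pair_div[simp]: "(l::nat) < 2^b \<Longrightarrow> (h * 2^b + l) div 2^b = h"
  by simp
lemma pair_mod[simp]: "(l::nat) < 2^b \<Longrightarrow> (h * 2^b + l) mod 2^b = l"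
  by simp

fun encl :: "nat \<Rightarrow> nat list \<Rightarrow> nat" where
  "encl w [] = 0"
| "encl w (a # as) = a * 2^(w * length as) + encl w as"

fun decl :: "nat \<Rightarrow> nat \<Rightarrow> nat \<Rightarrow> nat list" where
  "decl w 0 n = []"
| "decl w (Suc k) n = (n div 2^(w*k)) mod 2^w # decl w k (n mod 2^(w*k))"

lemma encl_lt: "(\<forall>a\<in>set as. a < 2^w) \<Longrightarrow> encl w as < 2^(w * length as)"
proof (induction as)
  case Nil then show ?case by simp
next
  case (Cons a as)
  have "a * 2^(w * length as) + encl w as < 2^(w + w * length as)"
    using Cons by (intro pair_lt) auto
  then show ?case by (simp add: add.commute)
qed

lemma decl_encl: "(\<forall>a\<in>set as. a < 2^w) \<Longrightarrow> decl w (length as) (encl w as) = as"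
proof (induction as)
  case Nil then show ?case by simp
next
  case (Cons a as)
  have lt: "encl w as < 2^(w * length as)" using Cons by (intro encl_lt) auto
  show ?case using Cons lt by simp
qed

lemma length_decl[simp]: "length (decl w k n) = k"
  by (induction k arbitrary: n) auto

lemma encl_decl: "n < 2^(w*k) \<Longrightarrow> encl w (decl w k n) = n"
proof (induction k arbitrary: n)
  case 0 then show ?case by simp
next
  case (Suc k)
  have "n div 2^(w*k) < 2^w"
    using Suc.prems by (simp add: div_less_iff_less_mult power_add[symmetric] add.commute)
  then show ?case using Suc by (simp add: div_mult_mod_eq)
qed

lemma set_decl: "\<forall>a\<in>set (decl w k n). a < 2^w"
  by (induction k arbitrary: n) auto

lemma encl_replicate0[simp]: "encl w (replicate k 0) = 0"
  by (induction k) auto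


type_synonym lstate = "nat \<times> nat \<times> nat list \<times> nat"

definition validL :: "nat \<Rightarrow> nat \<Rightarrow> nat \<Rightarrow> nat \<Rightarrow> lstate \<Rightarrow> bool" where
  "validL \<kappa> ms m1 w L = (case L of (g,t,as,u) \<Rightarrow> g < 2^\<kappa> \<and> t < 2^m1 \<and> length as = \<kappa>
      \<and> (\<forall>a\<in>set as. a < 2^ms) \<and> u < 2^w)"

definition Eenc :: "nat \<Rightarrow> nat \<Rightarrow> nat \<Rightarrow> nat \<Rightarrow> lstate \<Rightarrow> nat" where
  "Eenc \<kappa> ms m1 w L = (case L of (g,t,as,u) \<Rightarrow> ((g*2^m1 + t) * 2^(ms*\<kappa>) + encl ms as) * 2^w + u)"

definition Ddec :: "nat \<Rightarrow> nat \<Rightarrow> nat \<Rightarrow> nat \<Rightarrow> nat \<Rightarrow> lstate" where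
  "Ddec \<kappa> ms m1 w n = (let n1 = n div 2^w; n2 = n1 div 2^(ms*\<kappa>)
     in (n2 div 2^m1, n2 mod 2^m1, decl ms \<kappa> (n1 mod 2^(ms*\<kappa>)), n mod 2^w))"

definition pT :: "nat \<Rightarrow> nat \<Rightarrow> nat \<Rightarrow> nat \<Rightarrow> (lstate \<Rightarrow> lstate) \<Rightarrow> nat \<Rightarrow> nat" where
  "pT \<kappa> ms m1 w T = Eenc \<kappa> ms m1 w \<circ> T \<circ> Ddec \<kappa> ms m1 w"

locale sim_enc =
  fixes \<kappa> ms m1 w :: nat
begin

abbreviation "valid \<equiv> validL \<kappa> ms m1 w"
abbreviation "E \<equiv> Eenc \<kappa> ms m1 w"
abbreviation "D \<equiv> Ddec \<kappa> ms m1 w"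
abbreviation "N \<equiv> \<kappa> + m1 + ms*\<kappa> + w"

lemma E_lt: "valid L \<Longrightarrow> E L < 2^N"
proof -
  assume v: "valid L"
  obtain g t as u where L: "L = (g,t,as,u)" by (cases L) auto
  have 1: "g*2^m1 + t < 2^(\<kappa>+m1)" using v L by (intro pair_lt) (auto simp: validL_def)
  have 2: "encl ms as < 2^(ms*\<kappa>)" using v L encl_lt[of as ms] by (auto simp: validL_def)
  have 3: "(g*2^m1 + t) * 2^(ms*\<kappa>) + encl ms as < 2^(\<kappa>+m1+ms*\<kappa>)" by (rule pair_lt[OF 1 2])
  have "((g*2^m1 + t) * 2^(ms*\<kappa>) + encl ms as) * 2^w + u < 2^(\<kappa>+m1+ms*\<kappa>+w)"
    using v L by (intro pair_lt[OF 3]) (auto simp: validL_def)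
  then show ?thesis using L by (simp add: Eenc_def)
qed

lemma D_E: "valid L \<Longrightarrow> D (E L) = L"
proof -
  assume v: "valid L"
  obtain g t as u where L: "L = (g,t,as,u)" by (cases L) auto
  have u: "u < 2^w" and t: "t < 2^m1" and las: "length as = \<kappa>" and das: "\<forall>a\<in>set as. a < 2^ms"
    using v L by (auto simp: validL_def)
  have 2: "encl ms as < 2^(ms*\<kappa>)" using las das encl_lt[of as ms] by auto
  show ?thesis using u t 2 decl_encl[OF das] las L by (simp add: Eenc_def Ddec_def Let_def)
qed

lemma D_valid: "n < 2^N \<Longrightarrow> valid (D n)"
proof -
  assume n: "n < 2^N"
  have g: "n div 2^w div 2^(ms*\<kappa>) div 2^m1 < 2^\<kappa>"
    using n by (simp add: div_less_iff_less_mult div_mult2_eq[symmetric] power_add[symmetric] ac_simps)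
  show ?thesis using g set_decl by (simp add: validL_def Ddec_def Let_def)
qed

lemma E_D: "n < 2^N \<Longrightarrow> E (D n) = n"
proof -
  assume n: "n < 2^N"
  have "E (D n) = ((n div 2^w div 2^(ms*\<kappa>) div 2^m1 * 2^m1 + n div 2^w div 2^(ms*\<kappa>) mod 2^m1) * 2^(ms*\<kappa>)
        + n div 2^w mod 2^(ms*\<kappa>)) * 2^w + n mod 2^w"
    by (simp add: Eenc_def Ddec_def Let_def encl_decl)
  also have "\<dots> = n" by (simp add: div_mult_mod_eq)
  finally show ?thesis .
qed

lemma E_inj: "valid L1 \<Longrightarrow> valid L2 \<Longrightarrow> E L1 = E L2 \<Longrightarrow> L1 = L2"
  by (metis D_E)

lemma pT_props:
  assumes Tv: "\<And>L. valid L \<Longrightarrow> valid (T L)" and Ti: "inj_on T {L. valid L}"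
  shows "\<forall>n<2^N. pT \<kappa> ms m1 w T n < 2^N"
    and "inj_on (pT \<kappa> ms m1 w T) {..<2^N}"
    and "\<And>L. valid L \<Longrightarrow> pT \<kappa> ms m1 w T (E L) = E (T L)"
proof -
  show "\<forall>n<2^N. pT \<kappa> ms m1 w T n < 2^N"
    using Tv D_valid E_lt by (simp add: pT_def)
  show "inj_on (pT \<kappa> ms m1 w T) {..<2^N}"
  proof (rule inj_onI)
    fix a b assume ab: "a \<in> {..<2^N}" "b \<in> {..<2^N}" "pT \<kappa> ms m1 w T a = pT \<kappa> ms m1 w T b"
    then have "T (D a) = T (D b)" using E_inj Tv D_valid by (auto simp: pT_def)
    moreover have "valid (D a)" "valid (D b)" using D_valid ab by auto
    ultimately have "D a = D b" using inj_onD[OF Ti] by blast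
    then show "a = b" using E_D ab by (metis lessThan_iff)
  qed
  show "\<And>L. valid L \<Longrightarrow> pT \<kappa> ms m1 w T (E L) = E (T L)"
    by (simp add: pT_def D_E)
qed

end


lemma add_mod_inj:
  fixes g h c N :: nat
  assumes "g < N" "h < N" "(g + c) mod N = (h + c) mod N" shows "g = h"
proof -
  have c: "c mod N < N" using assms by auto
  have e: "(g + c mod N) mod N = (h + c mod N) mod N" using assms(3) by (simp add: mod_add_right_eq)
  have mg: "(g + c mod N) mod N = (if g + c mod N < N then g + c mod N else g + c mod N - N)"
  proof (cases "g + c mod N < N")
    case False
    then have "g + c mod N - N < N" using assms c by linarith
    then show ?thesis using False by (simp add: mod_if[of "g + c mod N"])
  qed simp
  have mh: "(h + c mod N) mod N = (if h + c mod N < N then h + c mod N else h + c mod N - N)"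
  proof (cases "h + c mod N < N")
    case False
    then have "h + c mod N - N < N" using assms c by linarith
    then show ?thesis using False by (simp add: mod_if[of "h + c mod N"])
  qed simp
  show ?thesis using e mg mh assms c by (auto split: if_splits)
qed
lemma rotate1_inj: "rotate1 xs = rotate1 ys \<Longrightarrow> xs = ys"
  by (cases xs; cases ys) auto
lemma neg_mod_inj:
  fixes a b N :: nat
  assumes "a < N" "b < N" "(N - a) mod N = (N - b) mod N" shows "a = b"
proof -
  have "(N - a) mod N = (if a = 0 then 0 else N - a)" for a using assms by (auto simp: mod_if)
  then show ?thesis using assms by (auto split: if_splits)
qed

lemma query_map_dec:
  assumes "qm1 Q + qm2 Q \<le> qm Q" "x < 2^qm2 Q" "y < 2^(qm Q - qm1 Q - qm2 Q)"
  shows "query_map Q f ((i*2^qm2 Q + x)*2^(qm Q - qm1 Q - qm2 Q) + y)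
    = (if i \<in> qZ Q then (i*2^qm2 Q + (x + qbeta Q (f (qtau Q i))) mod 2^qm2 Q)*2^(qm Q - qm1 Q - qm2 Q) + y
       else (i*2^qm2 Q + x)*2^(qm Q - qm1 Q - qm2 Q) + y)"
proof -
  define m2 where "m2 = qm2 Q"
  define r where "r = qm Q - qm1 Q - m2"
  have w: "qm Q - qm1 Q = m2 + r" using assms(1) by (simp add: r_def m2_def)
  have xy: "x * 2^r + y < 2^(m2 + r)" using assms by (intro pair_lt) (auto simp: r_def m2_def)
  have n: "(i*2^m2 + x)*2^r + y = i * 2^(m2+r) + (x * 2^r + y)"
    by (simp add: algebra_simps power_add)
  have d1: "((i*2^m2 + x)*2^r + y) div 2^(qm Q - qm1 Q) = i" using xy by (simp only: w n pair_div)
  have d2: "(((i*2^m2 + x)*2^r + y) div 2^r) mod 2^m2 = x" using assms(2,3) by (simp add: r_def m2_def)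
  have d3: "((i*2^m2 + x)*2^r + y) mod 2^r = y" using assms(3) by (simp add: r_def m2_def)
  have e: "i * 2^(qm Q - qm1 Q) + z * 2^r + y = (i*2^m2 + z)*2^r + y" for z
    by (simp add: w algebra_simps power_add)
  show ?thesis
    unfolding query_map_def Let_def
    unfolding m2_def[symmetric] r_def[symmetric]
    by (simp only: d1 d2 d3 e)
qed


definition Qn :: "nat \<Rightarrow> nat \<Rightarrow> (nat \<Rightarrow> 'dt \<Rightarrow> 'd) \<Rightarrow> ('k \<Rightarrow> nat) \<Rightarrow> ('dt,'kt) query \<Rightarrow> ('d,'k) query" where
  "Qn \<kappa> ms \<eta> \<beta> Qt = \<lparr>qm = \<kappa> + qm1 Qt + ms*\<kappa> + (qm Qt - qm1 Qt), qm1 = \<kappa> + qm1 Qt, qm2 = ms,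
     qZ = {g*2^qm1 Qt + t | g t. g < \<kappa> \<and> t \<in> qZ Qt},
     qtau = (\<lambda>i. \<eta> (i div 2^qm1 Qt) (qtau Qt (i mod 2^qm1 Qt))), qbeta = \<beta>\<rparr>"

definition Qlog :: "nat \<Rightarrow> nat \<Rightarrow> (nat \<Rightarrow> 'dt \<Rightarrow> 'd) \<Rightarrow> ('k \<Rightarrow> nat) \<Rightarrow> ('dt,'kt) query \<Rightarrow> ('d \<Rightarrow> 'k) \<Rightarrow> lstate \<Rightarrow> lstate" where
  "Qlog \<kappa> ms \<eta> \<beta> Qt f L = (case L of (g,t,as,u) \<Rightarrow>
     if g < \<kappa> \<and> t \<in> qZ Qt then (g,t,((hd as + \<beta> (f (\<eta> g (qtau Qt t)))) mod 2^ms) # tl as, u) else (g,t,as,u))"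

locale sim =
  fixes \<kappa> ms :: nat and \<eta> :: "nat \<Rightarrow> 'dt \<Rightarrow> 'd" and \<beta> :: "'k \<Rightarrow> nat"
    and \<rho> :: "'dt \<Rightarrow> nat list \<Rightarrow> 'kt" and Qt :: "('dt,'kt) query"
  assumes kpos: "\<kappa> \<ge> 1" and mspos: "ms \<ge> 1" and \<beta>lt: "\<forall>k. \<beta> k < 2^ms" and qv: "query_valid Qt"
begin

sublocale sim_enc \<kappa> ms "qm1 Qt" "qm Qt - qm1 Qt" .

abbreviation "m \<equiv> qm Qt"
abbreviation "m1 \<equiv> qm1 Qt"
abbreviation "w \<equiv> qm Qt - qm1 Qt"
abbreviation "Q \<equiv> Qn \<kappa> ms \<eta> \<beta> Qt"
abbreviation "QL \<equiv> Qlog \<kappa> ms \<eta> \<beta> Qt"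

lemma m1_le: "m1 \<le> m" using qv by (auto simp: query_valid_def)
lemma Zt_lt: "t \<in> qZ Qt \<Longrightarrow> t < 2^m1" using qv by (auto simp: query_valid_def)

lemma qm_Q: "qm Q = N" by (simp add: Qn_def)

lemma ms_le: "ms \<le> ms*\<kappa>"
proof -
  have "ms*1 \<le> ms*\<kappa>" using kpos by (rule mult_le_mono2)
  then show ?thesis by simp
qed

lemma Q_le: "qm1 Q + qm2 Q \<le> qm Q"
proof -
  have "qm1 Q + qm2 Q = \<kappa> + m1 + ms" "qm Q = \<kappa> + m1 + ms*\<kappa> + w" by (simp_all add: Qn_def)
  then show ?thesis using ms_le by linarith
qed

lemma E_cons:
  assumes "\<kappa> = Suc (length as')"
  shows "E (g,t,a#as',u) = ((g*2^m1+t)*2^ms + a) * 2^(ms*length as' + w) + (encl ms as' * 2^w + u)"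
  using assms by (simp add: Eenc_def algebra_simps power_add)

lemma Q_valid: "query_valid Q"
proof -
  obtain t where t: "t \<in> qZ Qt" using qv by (auto simp: query_valid_def)
  have "t \<in> qZ Q" by (simp add: Qn_def) (rule exI[of _ 0], use t kpos in auto)
  moreover have "qZ Q \<subseteq> {..<2 ^ qm1 Q}"
  proof
    fix i assume "i \<in> qZ Q"
    then obtain g t where "i = g*2^m1 + t" "g < \<kappa>" "t \<in> qZ Qt" by (auto simp: Qn_def)
    moreover have "g < 2^\<kappa>" using \<open>g < \<kappa>\<close> less_exp less_trans by blast
    ultimately show "i \<in> {..<2 ^ qm1 Q}" using Zt_lt pair_lt[of g \<kappa> t m1] by (auto simp: Qn_def)
  qed
  ultimately show ?thesis using qv kpos mspos \<beta>lt Q_le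
    by (auto simp: query_valid_def Qn_def)
qed

lemma in_set_tl: "x \<in> set (tl xs) \<Longrightarrow> x \<in> set xs"
  by (cases xs) auto

lemma QL_valid: "valid L \<Longrightarrow> valid (QL f L)"
  by (cases L) (auto simp: Qlog_def validL_def dest: in_set_tl split: if_splits)

lemma Q_E: "valid L \<Longrightarrow> query_map Q f (E L) = E (QL f L)"
proof -
  assume v: "valid L"
  obtain g t as u where L: "L = (g,t,as,u)" by (cases L) auto
  have las: "length as = \<kappa>" using v L by (simp add: validL_def)
  then obtain a as' where as: "as = a # as'" using kpos by (cases as) auto
  have k: "\<kappa> = Suc (length as')" using las as by simp
  have a: "a < 2^ms" and das': "\<forall>x\<in>set as'. x < 2^ms" and t: "t < 2^m1" and u: "u < 2^w" and g: "g < 2^\<kappa>"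
    using v L as by (auto simp: validL_def)
  have r: "qm Q - qm1 Q - qm2 Q = ms*length as' + w" using k by (simp add: Qn_def)
  have y: "encl ms as' * 2^w + u < 2^(qm Q - qm1 Q - qm2 Q)"
    unfolding r using u encl_lt[OF das'] by (intro pair_lt) auto
  have le: "qm1 Q + qm2 Q \<le> qm Q" using Q_le .
  have mem: "g*2^m1 + t \<in> qZ Q \<longleftrightarrow> g < \<kappa> \<and> t \<in> qZ Qt"
  proof
    assume "g*2^m1 + t \<in> qZ Q"
    then obtain g' t' where e: "g*2^m1 + t = g'*2^m1 + t'" "g' < \<kappa>" "t' \<in> qZ Qt" by (auto simp: Qn_def)
    have t': "t' < 2^m1" using Zt_lt e(3) .
    have "g = g'" using e(1) t t' by (metis pair_div)
    moreover have "t = t'" using e(1) t t' by (metis pair_mod)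
    ultimately show "g < \<kappa> \<and> t \<in> qZ Qt" using e by auto
  qed (auto simp: Qn_def)
  have tau: "qtau Q (g*2^m1 + t) = \<eta> g (qtau Qt t)" using t by (simp add: Qn_def)
  have "query_map Q f (E L) = query_map Q f (((g*2^m1+t)*2^qm2 Q + a) * 2^(qm Q - qm1 Q - qm2 Q) + (encl ms as' * 2^w + u))"
    using E_cons[OF k] L as r by (simp add: Qn_def)
  also have "\<dots> = (if g*2^m1+t \<in> qZ Q then ((g*2^m1+t)*2^qm2 Q + (a + qbeta Q (f (qtau Q (g*2^m1+t)))) mod 2^qm2 Q)*2^(qm Q - qm1 Q - qm2 Q) + (encl ms as' * 2^w + u)
       else ((g*2^m1+t)*2^qm2 Q + a)*2^(qm Q - qm1 Q - qm2 Q) + (encl ms as' * 2^w + u))"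
    using le y a by (intro query_map_dec) (auto simp: Qn_def)
  also have "\<dots> = E (QL f L)"
    unfolding mem tau r using E_cons[OF k] L as by (simp add: Qlog_def Qn_def)
  finally show ?thesis .
qed

lemma Q_range: "\<forall>n<2^N. query_map Q f n < 2^N"
  using Q_E E_D D_valid E_lt QL_valid by metis

end


definition negh :: "nat \<Rightarrow> lstate \<Rightarrow> lstate" where
  "negh ms L = (case L of (g,t,as,u) \<Rightarrow> (g,t,((2^ms - hd as) mod 2^ms) # tl as, u))"

definition Tfwd :: "nat \<Rightarrow> lstate \<Rightarrow> lstate" where
  "Tfwd \<kappa> L = (case L of (g,t,as,u) \<Rightarrow> ((g+1) mod 2^\<kappa>, t, rotate1 as, u))"

definition rotr :: "nat list \<Rightarrow> nat list" where
  "rotr as = (if as = [] then [] else last as # butlast as)"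

definition Tbwd0 :: "nat \<Rightarrow> lstate \<Rightarrow> lstate" where
  "Tbwd0 \<kappa> L = (case L of (g,t,as,u) \<Rightarrow> ((g + 2^\<kappa> - 1) mod 2^\<kappa>, t, rotr as, u))"

definition updu :: "('dt,'kt) query \<Rightarrow> ('dt \<Rightarrow> nat list \<Rightarrow> 'kt) \<Rightarrow> nat \<Rightarrow> nat list \<Rightarrow> nat \<Rightarrow> nat" where
  "updu Qt \<rho> t as u = (let r = qm Qt - qm1 Qt - qm2 Qt in
     if t \<in> qZ Qt then ((u div 2^r + qbeta Qt (\<rho> (qtau Qt t) (rotate1 as))) mod 2^(qm2 Qt)) * 2^r + u mod 2^r else u)"

definition Tmid0 :: "('dt,'kt) query \<Rightarrow> ('dt \<Rightarrow> nat list \<Rightarrow> 'kt) \<Rightarrow> lstate \<Rightarrow> lstate" where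
  "Tmid0 Qt \<rho> L = (case L of (g,t,as,u) \<Rightarrow> (g,t,as,updu Qt \<rho> t as u))"

definition Tlist :: "nat \<Rightarrow> nat \<Rightarrow> ('dt,'kt) query \<Rightarrow> ('dt \<Rightarrow> nat list \<Rightarrow> 'kt) \<Rightarrow> (lstate \<Rightarrow> lstate) list" where
  "Tlist \<kappa> ms Qt \<rho> = replicate (\<kappa>-1) (Tfwd \<kappa>) @ (negh ms \<circ> Tmid0 Qt \<rho>) # replicate (\<kappa>-1) (negh ms \<circ> Tbwd0 \<kappa>)"

context sim
begin

lemma negh_valid: "valid L \<Longrightarrow> valid (negh ms L)"
  using kpos by (cases L) (auto simp: negh_def validL_def dest: in_set_tl)

lemma negh_inj: "inj_on (negh ms) {L. valid L}"
proof (rule inj_onI)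
  fix L1 L2 assume v: "L1 \<in> {L. valid L}" "L2 \<in> {L. valid L}" and e: "negh ms L1 = negh ms L2"
  obtain g1 t1 as1 u1 where L1: "L1 = (g1,t1,as1,u1)" by (cases L1) auto
  obtain g2 t2 as2 u2 where L2: "L2 = (g2,t2,as2,u2)" by (cases L2) auto
  have ne: "as1 \<noteq> []" "as2 \<noteq> []" using v L1 L2 kpos by (auto simp: validL_def)
  have h: "hd as1 < 2^ms" "hd as2 < 2^ms" using v L1 L2 ne by (auto simp: validL_def)
  have "(2^ms - hd as1) mod 2^ms = (2^ms - hd as2) mod 2^ms" "tl as1 = tl as2"
    and rest: "g1 = g2" "t1 = t2" "u1 = u2" using e L1 L2 by (auto simp: negh_def)
  then have "hd as1 = hd as2" "tl as1 = tl as2" using neg_mod_inj[OF h] by auto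
  then have "as1 = as2" using ne by (metis list.collapse)
  then show "L1 = L2" using L1 L2 rest by simp
qed

lemma Tfwd_valid: "valid L \<Longrightarrow> valid (Tfwd \<kappa> L)"
  by (cases L) (auto simp: Tfwd_def validL_def)

lemma Tfwd_inj: "inj_on (Tfwd \<kappa>) {L. valid L}"
proof (rule inj_onI)
  fix L1 L2 assume v: "L1 \<in> {L. valid L}" "L2 \<in> {L. valid L}" and e: "Tfwd \<kappa> L1 = Tfwd \<kappa> L2"
  obtain g1 t1 as1 u1 where L1: "L1 = (g1,t1,as1,u1)" by (cases L1) auto
  obtain g2 t2 as2 u2 where L2: "L2 = (g2,t2,as2,u2)" by (cases L2) auto
  have "g1 = g2" using e v L1 L2 add_mod_inj[of g1 "2^\<kappa>" g2 1] by (auto simp: Tfwd_def validL_def)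
  moreover have "as1 = as2" using e L1 L2 rotate1_inj by (auto simp: Tfwd_def)
  ultimately show "L1 = L2" using e L1 L2 by (auto simp: Tfwd_def)
qed

lemma rotr_len: "length (rotr as) = length as"
  by (auto simp: rotr_def)
lemma rotr_set: "set (rotr as) = set as"
proof (cases "as = []")
  case False
  then have e: "set (butlast as @ [last as]) = set as" by (metis append_butlast_last_id)
  have "set (rotr as) = insert (last as) (set (butlast as))" using False by (simp add: rotr_def)
  also have "\<dots> = set (butlast as @ [last as])" by simp
  finally show ?thesis using e by simp
qed (simp add: rotr_def)
lemma rotr_inj:
  assumes "length as1 = length as2" "rotr as1 = rotr as2" shows "as1 = as2"
proof (cases "as1 = []")
  case True then show ?thesis using assms by simp
next
  case False
  then have ne: "as2 \<noteq> []" using assms(1) by auto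
  then have "last as1 = last as2" "butlast as1 = butlast as2" using False assms(2) by (auto simp: rotr_def)
  then show ?thesis using False ne by (metis append_butlast_last_id)
qed

lemma Tbwd0_valid: "valid L \<Longrightarrow> valid (Tbwd0 \<kappa> L)"
  by (cases L) (auto simp: Tbwd0_def validL_def rotr_len rotr_set)

lemma Tbwd0_inj: "inj_on (Tbwd0 \<kappa>) {L. valid L}"
proof (rule inj_onI)
  fix L1 L2 assume v: "L1 \<in> {L. valid L}" "L2 \<in> {L. valid L}" and e: "Tbwd0 \<kappa> L1 = Tbwd0 \<kappa> L2"
  obtain g1 t1 as1 u1 where L1: "L1 = (g1,t1,as1,u1)" by (cases L1) auto
  obtain g2 t2 as2 u2 where L2: "L2 = (g2,t2,as2,u2)" by (cases L2) auto
  have "(g1 + (2^\<kappa> - 1)) mod 2^\<kappa> = (g2 + (2^\<kappa> - 1)) mod 2^\<kappa>"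
    using e L1 L2 by (auto simp: Tbwd0_def)
  then have "g1 = g2" using v L1 L2 add_mod_inj[of g1 "2^\<kappa>" g2 "2^\<kappa> - 1"] by (auto simp: validL_def)
  moreover have "as1 = as2" using e v L1 L2 rotr_inj by (auto simp: Tbwd0_def validL_def)
  ultimately show "L1 = L2" using e L1 L2 by (auto simp: Tbwd0_def)
qed

abbreviation "m2 \<equiv> qm2 Qt"
abbreviation "r \<equiv> qm Qt - qm1 Qt - qm2 Qt"

lemma pw: "(2::nat)^w = 2^(m2 + r)"
proof -
  have "m2 + r = w" using qv by (auto simp: query_valid_def)
  then show ?thesis by simp
qed

lemma updu_lt: "u < 2^w \<Longrightarrow> updu Qt \<rho> t as u < 2^w"
proof -
  assume u: "u < 2^w"
  have "((u div 2^r + c) mod 2^m2) * 2^r + u mod 2^r < 2^(m2 + r)" for c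
    by (intro pair_lt) auto
  then show ?thesis using u unfolding updu_def Let_def pw by auto
qed

lemma updu_inj:
  assumes "u1 < 2^w" "u2 < 2^w" "updu Qt \<rho> t as u1 = updu Qt \<rho> t as u2"
  shows "u1 = u2"
proof (cases "t \<in> qZ Qt")
  case True
  define c where "c = qbeta Qt (\<rho> (qtau Qt t) (rotate1 as))"
  have e: "((u1 div 2^r + c) mod 2^m2) * 2^r + u1 mod 2^r = ((u2 div 2^r + c) mod 2^m2) * 2^r + u2 mod 2^r"
    using assms(3) True by (simp add: updu_def c_def Let_def)
  have "u1 mod 2^r = u2 mod 2^r" using e by (metis mod_less_divisor pair_mod pos2 zero_less_power)
  moreover have "(u1 div 2^r + c) mod 2^m2 = (u2 div 2^r + c) mod 2^m2"
    using e by (metis mod_less_divisor pair_div pos2 zero_less_power)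
  moreover have "u1 div 2^r < 2^m2" "u2 div 2^r < 2^m2"
    using assms(1,2) unfolding pw by (simp_all add: div_less_iff_less_mult power_add)
  ultimately have "u1 div 2^r = u2 div 2^r" "u1 mod 2^r = u2 mod 2^r" using add_mod_inj by blast+
  then show ?thesis by (metis div_mult_mod_eq)
next
  case False
  then show ?thesis using assms by (simp add: updu_def)
qed

lemma Tmid0_valid: "valid L \<Longrightarrow> valid (Tmid0 Qt \<rho> L)"
  by (cases L) (auto simp: Tmid0_def validL_def updu_lt)

lemma Tmid0_inj: "inj_on (Tmid0 Qt \<rho>) {L. valid L}"
proof (rule inj_onI)
  fix L1 L2 assume v: "L1 \<in> {L. valid L}" "L2 \<in> {L. valid L}" and e: "Tmid0 Qt \<rho> L1 = Tmid0 Qt \<rho> L2"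
  obtain g1 t1 as1 u1 where L1: "L1 = (g1,t1,as1,u1)" by (cases L1) auto
  obtain g2 t2 as2 u2 where L2: "L2 = (g2,t2,as2,u2)" by (cases L2) auto
  have "g1 = g2" "t1 = t2" "as1 = as2" "updu Qt \<rho> t1 as1 u1 = updu Qt \<rho> t1 as1 u2"
    using e L1 L2 by (auto simp: Tmid0_def)
  moreover have "u1 = u2" using calculation v L1 L2 updu_inj by (auto simp: validL_def)
  ultimately show "L1 = L2" using L1 L2 by simp
qed

lemma Tlist_props: "T \<in> set (Tlist \<kappa> ms Qt \<rho>) \<Longrightarrow> (\<forall>L. valid L \<longrightarrow> valid (T L)) \<and> inj_on T {L. valid L}"
proof -
  assume "T \<in> set (Tlist \<kappa> ms Qt \<rho>)"
  then consider "T = Tfwd \<kappa>" | "T = negh ms \<circ> Tmid0 Qt \<rho>" | "T = negh ms \<circ> Tbwd0 \<kappa>"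
    by (auto simp: Tlist_def split: if_splits)
  then show ?thesis
  proof cases
    case 1 then show ?thesis using Tfwd_valid Tfwd_inj by auto
  next
    case 2 then show ?thesis using negh_valid negh_inj Tmid0_valid Tmid0_inj
      by (auto intro!: comp_inj_on inj_on_subset[OF negh_inj])
  next
    case 3 then show ?thesis using negh_valid negh_inj Tbwd0_valid Tbwd0_inj
      by (auto intro!: comp_inj_on inj_on_subset[OF negh_inj])
  qed
qed

lemma length_Tlist: "length (Tlist \<kappa> ms Qt \<rho>) = 2*\<kappa> - 1"
  using kpos by (simp add: Tlist_def)

end


definition embf :: "nat \<Rightarrow> nat \<Rightarrow> ('dt,'kt) query \<Rightarrow> nat \<Rightarrow> nat" where
  "embf \<kappa> ms Qt y = Eenc \<kappa> ms (qm1 Qt) (qm Qt - qm1 Qt)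
     (0, y div 2^(qm Qt - qm1 Qt), replicate \<kappa> 0, y mod 2^(qm Qt - qm1 Qt))"

definition unembf :: "nat \<Rightarrow> nat \<Rightarrow> ('dt,'kt) query \<Rightarrow> nat \<Rightarrow> nat" where
  "unembf \<kappa> ms Qt n = (case Ddec \<kappa> ms (qm1 Qt) (qm Qt - qm1 Qt) n of (g,t,as,u) \<Rightarrow> t * 2^(qm Qt - qm1 Qt) + u)"

fun lrun :: "(lstate \<Rightarrow> lstate) \<Rightarrow> (lstate \<Rightarrow> lstate) list \<Rightarrow> lstate \<Rightarrow> lstate" where
  "lrun Q [] L = L"
| "lrun Q (T # Ts) L = lrun Q Ts (T (Q L))"

lemma lrun_append: "lrun Q (xs @ ys) L = lrun Q ys (lrun Q xs L)"
  by (induction xs arbitrary: L) auto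

lemma lrun_replicate: "lrun Q (replicate n T) L = ((T \<circ> Q) ^^ n) L"
  by (induction n arbitrary: L) (simp_all add: funpow_Suc_right del: funpow.simps(2))

context sim_enc
begin

lemma cq_link:
  assumes qE: "\<forall>L. valid L \<longrightarrow> q (E L) = E (Ql L) \<and> valid (Ql L)"
    and Ts: "\<forall>T\<in>set Ts. (\<forall>L. valid L \<longrightarrow> valid (T L)) \<and> inj_on T {L. valid L}"
    and pi: "\<forall>L. valid L \<longrightarrow> \<pi> (E L) = E (h L) \<and> valid (h L)"
  shows "\<forall>L. valid L \<longrightarrow> cq q \<pi> (map (pT \<kappa> ms m1 w) Ts) (E L) = E (lrun Ql Ts (h L)) \<and> valid (lrun Ql Ts (h L))"
  using Ts pi
proof (induction Ts arbitrary: \<pi> h)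
  case Nil then show ?case by simp
next
  case (Cons T Ts)
  have T: "\<forall>L. valid L \<longrightarrow> valid (T L)" "inj_on T {L. valid L}" using Cons.prems by auto
  have step: "\<forall>L. valid L \<longrightarrow> (pT \<kappa> ms m1 w T \<circ> q \<circ> \<pi>) (E L) = E ((T \<circ> Ql \<circ> h) L) \<and> valid ((T \<circ> Ql \<circ> h) L)"
  proof (intro allI impI)
    fix L assume L: "valid L"
    have h: "\<pi> (E L) = E (h L)" "valid (h L)" using Cons.prems(2) L by blast+
    have q: "q (E (h L)) = E (Ql (h L))" "valid (Ql (h L))" using qE h(2) by blast+
    have p: "pT \<kappa> ms m1 w T (E (Ql (h L))) = E (T (Ql (h L)))"
      using pT_props(3)[of T, OF _ T(2) q(2)] T(1) by blast
    show "(pT \<kappa> ms m1 w T \<circ> q \<circ> \<pi>) (E L) = E ((T \<circ> Ql \<circ> h) L) \<and> valid ((T \<circ> Ql \<circ> h) L)"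
    proof -
      have "valid (T (Ql (h L)))" using T(1) q(2) by blast
      then show ?thesis using h q p by simp
    qed
  qed
  have "\<forall>L. valid L \<longrightarrow> cq q (pT \<kappa> ms m1 w T \<circ> q \<circ> \<pi>) (map (pT \<kappa> ms m1 w) Ts) (E L) = E (lrun Ql Ts ((T \<circ> Ql \<circ> h) L)) \<and> valid (lrun Ql Ts ((T \<circ> Ql \<circ> h) L))"
    by (rule Cons.IH[OF _ step]) (use Cons.prems(1) in simp)
  then show ?case by simp
qed

end

context sim
begin

abbreviation "emb \<equiv> embf \<kappa> ms Qt"
abbreviation "unemb \<equiv> unembf \<kappa> ms Qt"

lemma pm: "(2::nat)^m = 2^(m1 + w)"
proof -
  have "m1 + w = m" using m1_le by simp
  then show ?thesis by simp
qed

lemma emb_valid: "y < 2^m \<Longrightarrow> valid (0, y div 2^w, replicate \<kappa> 0, y mod 2^w)"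
proof -
  assume y: "y < 2^m"
  have "y < 2^m1 * 2^w" using y pm by (simp add: power_add)
  then have "y div 2^w < 2^m1" by (simp add: div_less_iff_less_mult)
  then show ?thesis by (simp add: validL_def)
qed

lemma unemb_lt: "unemb n < 2^m"
proof -
  obtain g t as u where D: "D n = (g,t,as,u)" by (cases "D n") auto
  have "t < 2^m1" "u < 2^w" using D by (auto simp: Ddec_def Let_def)
  then have "t * 2^w + u < 2^(m1 + w)" by (rule pair_lt)
  then show ?thesis using D pm by (simp add: unembf_def)
qed

sublocale emb_ctx m N emb unemb
proof
  fix y :: nat assume y: "y < 2^m"
  show "emb y < 2^N" using E_lt[OF emb_valid[OF y]] by (simp add: embf_def)
  show "unemb (emb y) = y" using D_E[OF emb_valid[OF y]] by (simp add: embf_def unembf_def div_mult_mod_eq)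
qed

lemma emb_unemb: "a < 2^N \<Longrightarrow> a \<in> emb ` {..<2^m} \<Longrightarrow> emb (unemb a) = a"
  using unemb_emb by auto

end


definition vfun :: "(nat \<Rightarrow> 'dt \<Rightarrow> 'd) \<Rightarrow> ('k \<Rightarrow> nat) \<Rightarrow> ('dt,'kt) query \<Rightarrow> ('d \<Rightarrow> 'k) \<Rightarrow> nat \<Rightarrow> nat \<Rightarrow> nat" where
  "vfun \<eta> \<beta> Qt f t j = (if t \<in> qZ Qt then \<beta> (f (\<eta> j (qtau Qt t))) else 0)"

lemma negadd: "(a::nat) < B \<Longrightarrow> ((B - a) mod B + a) mod B = 0"
  by (cases "a = 0") auto

lemma rotr_snoc: "rotr (xs @ [x]) = x # xs"
  by (simp add: rotr_def)

context sim
begin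

abbreviation "v \<equiv> vfun \<eta> \<beta> Qt"

lemma v_lt: "v f t j < 2^ms"
  using \<beta>lt by (simp add: vfun_def)

lemma QL_step:
  assumes "g' < \<kappa>" "a < 2^ms"
  shows "QL f (g', t, a # as, u0) = (g', t, ((a + v f t g') mod 2^ms) # as, u0)"
  using assms by (simp add: Qlog_def vfun_def)

lemma phase1:
  "j < \<kappa> \<Longrightarrow> ((Tfwd \<kappa> \<circ> QL f)^^j) (0,t,replicate \<kappa> 0,u) = (j,t,replicate (\<kappa>-j) 0 @ map (v f t) [0..<j], u)"
proof (induction j)
  case 0 then show ?case by simp
next
  case (Suc j)
  have IH: "((Tfwd \<kappa> \<circ> QL f)^^j) (0,t,replicate \<kappa> 0,u) = (j,t,replicate (\<kappa>-j) 0 @ map (v f t) [0..<j], u)"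
    by (rule Suc.IH) (use Suc.prems in linarith)
  have rep: "replicate (\<kappa>-j) 0 = 0 # replicate (\<kappa> - Suc j) (0::nat)"
    using Suc.prems by (simp add: Suc_diff_Suc[symmetric])
  have q: "QL f (j,t,replicate (\<kappa>-j) 0 @ map (v f t) [0..<j], u) = (j,t, v f t j # (replicate (\<kappa> - Suc j) 0 @ map (v f t) [0..<j]), u)"
    unfolding rep using QL_step[of j 0 f t] Suc.prems v_lt[of f t j] by simp
  have "Suc j < 2^\<kappa>" using Suc.prems less_exp[of \<kappa>] by linarith
  then have sj: "Suc j mod 2^\<kappa> = Suc j" by simp
  have "((Tfwd \<kappa> \<circ> QL f)^^Suc j) (0,t,replicate \<kappa> 0,u) = Tfwd \<kappa> (QL f (((Tfwd \<kappa> \<circ> QL f)^^j) (0,t,replicate \<kappa> 0,u)))"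
    by simp
  also have "\<dots> = Tfwd \<kappa> (j,t, v f t j # (replicate (\<kappa> - Suc j) 0 @ map (v f t) [0..<j]), u)"
    unfolding IH q ..
  also have "\<dots> = (Suc j,t,replicate (\<kappa>-Suc j) 0 @ map (v f t) [0..<Suc j], u)"
    using sj by (simp add: Tfwd_def)
  finally show ?case .
qed

definition S2 :: "('d \<Rightarrow> 'k) \<Rightarrow> nat \<Rightarrow> nat \<Rightarrow> nat \<Rightarrow> lstate" where
  "S2 f t u' j = (j, t, ((2^ms - v f t j) mod 2^ms) # replicate (\<kappa>-1-j) 0 @ map (v f t) [0..<j], u')"

lemma phase2:
  "i \<le> \<kappa>-1 \<Longrightarrow> (((negh ms \<circ> Tbwd0 \<kappa>) \<circ> QL f)^^i) (S2 f t u' (\<kappa>-1)) = S2 f t u' (\<kappa>-1-i)"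
proof (induction i)
  case 0 then show ?case by simp
next
  case (Suc i)
  define j' where "j' = \<kappa> - 1 - Suc i"
  have jj: "\<kappa> - 1 - i = Suc j'" using Suc.prems by (simp add: j'_def)
  have IH0: "(((negh ms \<circ> Tbwd0 \<kappa>) \<circ> QL f)^^i) (S2 f t u' (\<kappa>-1)) = S2 f t u' (\<kappa>-1-i)"
    by (rule Suc.IH) (use Suc.prems in linarith)
  have IH: "(((negh ms \<circ> Tbwd0 \<kappa>) \<circ> QL f)^^i) (S2 f t u' (\<kappa>-1)) = S2 f t u' (Suc j')"
    using IH0 unfolding jj .
  have jk: "Suc j' < \<kappa>" using Suc.prems jj by simp
  let ?rest = "replicate (\<kappa>-1-Suc j') 0 @ map (v f t) [0..<Suc j']"
  have q: "QL f (S2 f t u' (Suc j')) = (Suc j', t, 0 # ?rest, u')"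
    unfolding S2_def using QL_step[OF jk, of "(2^ms - v f t (Suc j')) mod 2^ms" f t] negadd[OF v_lt[of f t "Suc j'"]]
    by simp
  have "j' < 2^\<kappa>" using jk less_exp[of \<kappa>] by linarith
  then have g: "(Suc j' + 2^\<kappa> - 1) mod 2^\<kappa> = j'" by simp
  have l: "0 # ?rest = (0 # replicate (\<kappa>-1-Suc j') 0 @ map (v f t) [0..<j']) @ [v f t j']" by simp
  have rep: "replicate (\<kappa> - Suc j') 0 = 0 # replicate (\<kappa> - Suc (Suc j')) (0::nat)"
    using jk by (simp add: Suc_diff_Suc[symmetric])
  have rr: "rotr (0 # ?rest) = v f t j' # (0 # replicate (\<kappa>-1-Suc j') 0 @ map (v f t) [0..<j'])"
    by (simp only: l rotr_snoc)
  have "((negh ms \<circ> Tbwd0 \<kappa>) \<circ> QL f) (S2 f t u' (Suc j')) = negh ms (Tbwd0 \<kappa> (Suc j', t, 0 # ?rest, u'))"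
    unfolding comp_def q ..
  also have "\<dots> = negh ms (j', t, v f t j' # (0 # replicate (\<kappa>-1-Suc j') 0 @ map (v f t) [0..<j']), u')"
    unfolding Tbwd0_def using g rr by simp
  also have "\<dots> = S2 f t u' j'"
    by (simp add: negh_def S2_def rep)
  finally have st: "((negh ms \<circ> Tbwd0 \<kappa>) \<circ> QL f) (S2 f t u' (Suc j')) = S2 f t u' j'" .
  have "(((negh ms \<circ> Tbwd0 \<kappa>) \<circ> QL f)^^Suc i) (S2 f t u' (\<kappa>-1))
      = ((negh ms \<circ> Tbwd0 \<kappa>) \<circ> QL f) ((((negh ms \<circ> Tbwd0 \<kappa>) \<circ> QL f)^^i) (S2 f t u' (\<kappa>-1)))"
    by (simp only: funpow.simps(2) o_apply)
  also have "\<dots> = S2 f t u' j'" unfolding IH st ..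
  also have "S2 f t u' j' = S2 f t u' (\<kappa> - 1 - Suc i)" by (simp add: j'_def)
  finally show ?case .
qed

lemma trace:
  assumes y: "y < 2^m" and hyp: "\<forall>s. gt s = \<rho> s (map (\<lambda>j. \<beta> (f (\<eta> j s))) [0..<\<kappa>])"
  shows "emb (query_map Qt gt y) = E (QL f (lrun (QL f) (Tlist \<kappa> ms Qt \<rho>) (0, y div 2^w, replicate \<kappa> 0, y mod 2^w)))
    \<and> query_map Qt gt y < 2^m"
proof -
  define t where "t = y div 2^w"
  define u where "u = y mod 2^w"
  define x where "x = u div 2^r"
  define yy where "yy = u mod 2^r"
  define u' where "u' = (if t \<in> qZ Qt then ((x + qbeta Qt (gt (qtau Qt t))) mod 2^m2)*2^r + yy else u)"
  have u_lt: "u < 2^w" by (simp add: u_def)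
  have x_lt: "x < 2^m2" using u_lt unfolding pw x_def by (simp add: div_less_iff_less_mult power_add)
  have yy_lt: "yy < 2^r" by (simp add: yy_def)
  have ydec: "y = (t*2^m2 + x)*2^r + yy"
  proof -
    have "y = t * 2^w + u" unfolding t_def u_def by (metis div_mult_mod_eq)
    also have "u = x * 2^r + yy" unfolding x_def yy_def by (metis div_mult_mod_eq)
    finally show ?thesis unfolding pw by (simp add: algebra_simps power_add)
  qed
  have le: "qm1 Qt + qm2 Qt \<le> qm Qt" using qv by (simp add: query_valid_def)
  have qA: "query_map Qt gt y = t*2^w + u'"
  proof -
    have "query_map Qt gt y = (if t \<in> qZ Qt then (t*2^m2 + (x + qbeta Qt (gt (qtau Qt t))) mod 2^m2)*2^r + yy
         else (t*2^m2 + x)*2^r + yy)"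
      unfolding ydec by (rule query_map_dec[OF le x_lt yy_lt])
    also have "\<dots> = t*2^w + u'"
      unfolding u'_def pw using ydec by (auto simp: algebra_simps power_add x_def yy_def)
    finally show ?thesis .
  qed
  have u'_lt: "u' < 2^w"
    unfolding u'_def pw using u_lt pw yy_lt by (auto intro!: pair_lt)
  have embq: "emb (query_map Qt gt y) = E (0, t, replicate \<kappa> 0, u')"
    unfolding qA embf_def using u'_lt by simp
  have k1: "\<kappa> - 1 < \<kappa>" using kpos by simp
  have ph1: "lrun (QL f) (replicate (\<kappa>-1) (Tfwd \<kappa>)) (0,t,replicate \<kappa> 0,u) = (\<kappa>-1, t, 0 # map (v f t) [0..<\<kappa>-1], u)"
    using phase1[OF k1, of f t u] kpos by (simp add: lrun_replicate)
  have q1: "QL f (\<kappa>-1, t, 0 # map (v f t) [0..<\<kappa>-1], u) = (\<kappa>-1, t, v f t (\<kappa>-1) # map (v f t) [0..<\<kappa>-1], u)"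
    using QL_step[OF k1, of 0 f t] v_lt[of f t "\<kappa>-1"] by simp
  have rot: "rotate1 (v f t (\<kappa>-1) # map (v f t) [0..<\<kappa>-1]) = map (v f t) [0..<\<kappa>]"
  proof -
    have "[0..<\<kappa>] = [0..<\<kappa>-1] @ [\<kappa>-1]" using kpos by (metis Suc_diff_1 less_le_trans upt_Suc_append zero_less_one le0)
    then show ?thesis by simp
  qed
  have upd: "updu Qt \<rho> t (v f t (\<kappa>-1) # map (v f t) [0..<\<kappa>-1]) u = u'"
  proof (cases "t \<in> qZ Qt")
    case True
    have e: "map (v f t) [0..<\<kappa>] = map (\<lambda>j. \<beta> (f (\<eta> j (qtau Qt t)))) [0..<\<kappa>]"
      using True by (simp add: vfun_def)
    have "\<rho> (qtau Qt t) (map (v f t) [0..<\<kappa>]) = gt (qtau Qt t)" unfolding e using hyp by simp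
    then show ?thesis unfolding updu_def Let_def rot u'_def using True by (simp add: x_def yy_def)
  next
    case False then show ?thesis by (simp add: updu_def u'_def)
  qed
  have mid: "(negh ms \<circ> Tmid0 Qt \<rho>) (QL f (\<kappa>-1, t, 0 # map (v f t) [0..<\<kappa>-1], u)) = S2 f t u' (\<kappa>-1)"
  proof -
    have m0: "Tmid0 Qt \<rho> (\<kappa>-1, t, v f t (\<kappa>-1) # map (v f t) [0..<\<kappa>-1], u) = (\<kappa>-1, t, v f t (\<kappa>-1) # map (v f t) [0..<\<kappa>-1], u')"
      by (simp only: Tmid0_def prod.case upd)
    show ?thesis unfolding comp_def q1 m0 by (simp add: negh_def S2_def)
  qed
  have ph2: "lrun (QL f) (replicate (\<kappa>-1) (negh ms \<circ> Tbwd0 \<kappa>)) (S2 f t u' (\<kappa>-1)) = S2 f t u' 0"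
    using phase2[of "\<kappa>-1" f t u'] by (simp add: lrun_replicate)
  have fin: "QL f (S2 f t u' 0) = (0, t, replicate \<kappa> 0, u')"
  proof -
    have "QL f (S2 f t u' 0) = (0, t, 0 # replicate (\<kappa>-1) 0, u')"
      unfolding S2_def using QL_step[of 0 "(2^ms - v f t 0) mod 2^ms" f t] kpos negadd[OF v_lt[of f t 0]]
      by simp
    also have "0 # replicate (\<kappa>-1) 0 = replicate \<kappa> (0::nat)" using kpos by (cases \<kappa>) auto
    finally show ?thesis .
  qed
  have "lrun (QL f) (Tlist \<kappa> ms Qt \<rho>) (0,t,replicate \<kappa> 0,u) = S2 f t u' 0"
    unfolding Tlist_def lrun_append ph1 using mid ph2 by simp
  then have A: "emb (query_map Qt gt y) = E (QL f (lrun (QL f) (Tlist \<kappa> ms Qt \<rho>) (0, y div 2^w, replicate \<kappa> 0, y mod 2^w)))"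
    using embq fin t_def u_def by simp
  have "t < 2^m1" using emb_valid[OF y] by (simp add: validL_def t_def)
  then have "t*2^w + u' < 2^(m1 + w)" using u'_lt by (rule pair_lt)
  then have "query_map Qt gt y < 2^m" unfolding qA pm .
  then show ?thesis using A by simp
qed

end


definition psT :: "nat \<Rightarrow> nat \<Rightarrow> ('dt,'kt) query \<Rightarrow> ('dt \<Rightarrow> nat list \<Rightarrow> 'kt) \<Rightarrow> (nat \<Rightarrow> nat) list" where
  "psT \<kappa> ms Qt \<rho> = map (pT \<kappa> ms (qm1 Qt) (qm Qt - qm1 Qt)) (Tlist \<kappa> ms Qt \<rho>)"

definition chunk :: "nat \<Rightarrow> nat \<Rightarrow> ('dt,'kt) query \<Rightarrow> ('dt \<Rightarrow> nat list \<Rightarrow> 'kt) \<Rightarrow> cmat \<Rightarrow> cmat list" where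
  "chunk \<kappa> ms Qt \<rho> U = map perm_op (psT \<kappa> ms Qt \<rho>) @ [extm (qm Qt) (embf \<kappa> ms Qt) (unembf \<kappa> ms Qt) U]"

definition sim_nm :: "nat \<Rightarrow> nat \<Rightarrow> (nat \<Rightarrow> 'dt \<Rightarrow> 'd) \<Rightarrow> ('k \<Rightarrow> nat) \<Rightarrow> ('dt \<Rightarrow> nat list \<Rightarrow> 'kt)
    \<Rightarrow> ('dt,'kt) nmalg \<Rightarrow> ('d,'k) nmalg" where
  "sim_nm \<kappa> ms \<eta> \<beta> \<rho> A = \<lparr>nquery = Qn \<kappa> ms \<eta> \<beta> (nquery A),
     nops = extm (qm (nquery A)) (embf \<kappa> ms (nquery A)) (unembf \<kappa> ms (nquery A)) (hd (nops A))
        # concat (map (chunk \<kappa> ms (nquery A) \<rho>) (tl (nops A)))\<rparr>"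

context sim
begin

abbreviation "ps \<equiv> psT \<kappa> ms Qt \<rho>"

lemma ps_props: "\<forall>p\<in>set ps. (\<forall>n<2^N. p n < 2^N) \<and> inj_on p {..<2^N}"
proof
  fix p assume "p \<in> set ps"
  then obtain T where T: "T \<in> set (Tlist \<kappa> ms Qt \<rho>)" "p = pT \<kappa> ms m1 w T" by (auto simp: psT_def)
  have "\<And>L. valid L \<Longrightarrow> valid (T L)" "inj_on T {L. valid L}" using Tlist_props[OF T(1)] by auto
  then show "(\<forall>n<2^N. p n < 2^N) \<and> inj_on p {..<2^N}" using pT_props T(2) by blast
qed

lemma ps_ne: "ps \<noteq> []"
  using length_Tlist kpos by (auto simp: psT_def)

lemma length_chunk: "length (chunk \<kappa> ms Qt \<rho> U) = 2*\<kappa>"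
  using length_Tlist kpos by (simp add: chunk_def psT_def)

lemma chunk_unitary: "unitary_op m U \<Longrightarrow> V \<in> set (chunk \<kappa> ms Qt \<rho> U) \<Longrightarrow> unitary_op N V"
  using ps_props unitary_perm unitary_extm by (auto simp: chunk_def)

lemma chunk_rep:
  assumes R: "rep m N emb X Xt" and hyp: "\<forall>s. gt s = \<rho> s (map (\<lambda>j. \<beta> (f (\<eta> j s))) [0..<\<kappa>])"
  shows "rep m N emb (run_ops N (query_op Q f) X (chunk \<kappa> ms Qt \<rho> U)) (mmul m U (mmul m (query_op Qt gt) Xt))"
proof -
  let ?q = "query_map Q f"
  let ?\<pi> = "?q \<circ> cq ?q id ps"
  have qr: "\<forall>n<2^N. ?q n < 2^N" using Q_range .
  have pr: "\<forall>p\<in>set ps. \<forall>n<2^N. p n < 2^N" using ps_props by blast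
  have cr: "\<forall>n<2^N. cq ?q id ps n < 2^N"
  proof -
    have "\<forall>\<pi>::nat\<Rightarrow>nat. (\<forall>n<2^N. \<pi> n < (2::nat)^N) \<longrightarrow> (\<forall>n<2^N. cq ?q \<pi> qs n < 2^N)" if "set qs \<subseteq> set ps" for qs
      using that
    proof (induction qs)
      case Nil then show ?case by simp
    next
      case (Cons p qs)
      show ?case
      proof (intro allI impI)
        fix \<pi> :: "nat \<Rightarrow> nat" and n :: nat assume "\<forall>n<2^N. \<pi> n < (2::nat)^N" "n < 2^N"
        moreover have "\<forall>n<2^N. p n < 2^N" using Cons.prems pr by auto
        ultimately have "\<forall>n<2^N. (p \<circ> ?q \<circ> \<pi>) n < 2^N" using qr by auto
        then show "cq ?q \<pi> (p # qs) n < 2^N" using Cons \<open>n < 2^N\<close> by auto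
      qed
    qed
    then show ?thesis by auto
  qed
  have run: "run_ops N (query_op Q f) X (chunk \<kappa> ms Qt \<rho> U)
      = mmul N (extm m emb unemb U) (mmul N (perm_op ?\<pi>) X)"
  proof -
    have "run_ops N (query_op Q f) X (chunk \<kappa> ms Qt \<rho> U)
        = run_ops N (perm_op ?q) (run_ops N (perm_op ?q) X (map perm_op ps)) [extm m emb unemb U]"
      by (simp add: chunk_def run_ops_append query_op_perm)
    also have "\<dots> = mmul N (extm m emb unemb U) (mmul N (perm_op ?q) (mmul N (perm_op (cq ?q id ps)) X))"
      using run_ops_perm[OF qr pr ps_ne] by simp
    also have "\<dots> = mmul N (extm m emb unemb U) (mmul N (perm_op ?\<pi>) X)"
      using mmul_perm_perm[OF cr] by simp
    finally show ?thesis .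
  qed
  have link: "\<forall>L. valid L \<longrightarrow> cq ?q id ps (E L) = E (lrun (QL f) (Tlist \<kappa> ms Qt \<rho>) L) \<and> valid (lrun (QL f) (Tlist \<kappa> ms Qt \<rho>) L)"
    using cq_link[of ?q "QL f" "Tlist \<kappa> ms Qt \<rho>" id id] Q_E QL_valid Tlist_props
    unfolding psT_def by auto
  have pe: "\<forall>y<2^m. ?\<pi> (emb y) = emb (query_map Qt gt y)"
  proof (intro allI impI)
    fix y :: nat assume y: "y < 2^m"
    have v0: "valid (0, y div 2^w, replicate \<kappa> 0, y mod 2^w)" using emb_valid[OF y] .
    have "?\<pi> (emb y) = ?q (E (lrun (QL f) (Tlist \<kappa> ms Qt \<rho>) (0, y div 2^w, replicate \<kappa> 0, y mod 2^w)))"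
      using link v0 by (simp add: embf_def)
    also have "\<dots> = E (QL f (lrun (QL f) (Tlist \<kappa> ms Qt \<rho>) (0, y div 2^w, replicate \<kappa> 0, y mod 2^w)))"
      using Q_E link v0 by blast
    also have "\<dots> = emb (query_map Qt gt y)" using trace[OF y hyp] by simp
    finally show "?\<pi> (emb y) = emb (query_map Qt gt y)" .
  qed
  have sr: "\<forall>y<2^m. query_map Qt gt y < 2^m" using trace[OF _ hyp] by blast
  have pir: "\<forall>n<2^N. ?\<pi> n < 2^N" using qr cr by auto
  have "rep m N emb (mmul N (perm_op ?\<pi>) X) (mmul m (perm_op (query_map Qt gt)) Xt)"
    by (rule rep_perm[OF R pir pe sr])
  then have "rep m N emb (mmul N (extm m emb unemb U) (mmul N (perm_op ?\<pi>) X)) (mmul m U (mmul m (perm_op (query_map Qt gt)) Xt))"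
    by (rule rep_ext)
  then show ?thesis unfolding run unfolding query_op_perm .
qed

lemma concat_rep:
  assumes "rep m N emb X Xt" and hyp: "\<forall>s. gt s = \<rho> s (map (\<lambda>j. \<beta> (f (\<eta> j s))) [0..<\<kappa>])"
  shows "rep m N emb (run_ops N (query_op Q f) X (concat (map (chunk \<kappa> ms Qt \<rho>) Us))) (run_ops m (query_op Qt gt) Xt Us)"
  using assms(1)
proof (induction Us arbitrary: X Xt)
  case Nil then show ?case by simp
next
  case (Cons U Us)
  have "rep m N emb (run_ops N (query_op Q f) X (chunk \<kappa> ms Qt \<rho> U)) (mmul m U (mmul m (query_op Qt gt) Xt))"
    using chunk_rep[OF Cons.prems hyp] .
  then show ?case using Cons.IH by (simp add: run_ops_append)
qed

lemma length_concat_chunk: "length (concat (map (chunk \<kappa> ms Qt \<rho>) Us)) = 2*\<kappa>*length Us"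
  by (induction Us) (auto simp: length_chunk)

end


abbreviation NN :: "nat \<Rightarrow> nat \<Rightarrow> ('dt,'kt) query \<Rightarrow> nat" where
  "NN \<kappa> ms Qt \<equiv> \<kappa> + qm1 Qt + ms*\<kappa> + (qm Qt - qm1 Qt)"

lemma sim_nm_facts:
  fixes A :: "('dt,'kt) nmalg" and \<eta> :: "nat \<Rightarrow> 'dt \<Rightarrow> 'd" and \<beta> :: "'k \<Rightarrow> nat" and \<rho> :: "'dt \<Rightarrow> nat list \<Rightarrow> 'kt"
  assumes "\<kappa> \<ge> 1" "ms \<ge> 1" "\<forall>k. \<beta> k < 2^ms" "nmalg_valid A"
  shows "nmalg_valid (sim_nm \<kappa> ms \<eta> \<beta> \<rho> A)"
    and "nmalg_nq (sim_nm \<kappa> ms \<eta> \<beta> \<rho> A) = 2*\<kappa>*nmalg_nq A"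
    and "nmalg_m (sim_nm \<kappa> ms \<eta> \<beta> \<rho> A) = NN \<kappa> ms (nquery A)"
    and "emb_ctx (qm (nquery A)) (NN \<kappa> ms (nquery A)) (embf \<kappa> ms (nquery A)) (unembf \<kappa> ms (nquery A))"
    and "unembf \<kappa> ms (nquery A) n < 2^qm (nquery A)"
    and "(\<forall>s. gt s = \<rho> s (map (\<lambda>j. \<beta> (f (\<eta> j s))) [0..<\<kappa>])) \<Longrightarrow>
         rep (qm (nquery A)) (NN \<kappa> ms (nquery A)) (embf \<kappa> ms (nquery A))
           (nmalg_op (sim_nm \<kappa> ms \<eta> \<beta> \<rho> A) f) (nmalg_op A gt)"
proof -
  have qv: "query_valid (nquery A)" and ne: "nops A \<noteq> []" and un: "\<forall>U\<in>set (nops A). unitary_op (qm (nquery A)) U"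
    using assms(4) by (auto simp: nmalg_valid_def)
  interpret sim \<kappa> ms \<eta> \<beta> \<rho> "nquery A"
    using assms qv by unfold_locales auto
  show "emb_ctx (qm (nquery A)) (NN \<kappa> ms (nquery A)) (embf \<kappa> ms (nquery A)) (unembf \<kappa> ms (nquery A))"
    by unfold_locales
  show "unembf \<kappa> ms (nquery A) n < 2^qm (nquery A)" by (rule unemb_lt)
  show nm: "nmalg_m (sim_nm \<kappa> ms \<eta> \<beta> \<rho> A) = NN \<kappa> ms (nquery A)"
    by (simp add: nmalg_m_def sim_nm_def Qn_def)
  show "nmalg_nq (sim_nm \<kappa> ms \<eta> \<beta> \<rho> A) = 2*\<kappa>*nmalg_nq A"
    by (simp add: nmalg_nq_def sim_nm_def length_concat_chunk)
  show "nmalg_valid (sim_nm \<kappa> ms \<eta> \<beta> \<rho> A)"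
    unfolding nmalg_valid_def
  proof (intro conjI)
    show "query_valid (nquery (sim_nm \<kappa> ms \<eta> \<beta> \<rho> A))" using Q_valid by (simp add: sim_nm_def)
    show "nops (sim_nm \<kappa> ms \<eta> \<beta> \<rho> A) \<noteq> []" by (simp add: sim_nm_def)
    have qmq: "qm (nquery (sim_nm \<kappa> ms \<eta> \<beta> \<rho> A)) = NN \<kappa> ms (nquery A)" by (simp add: sim_nm_def Qn_def)
    have h: "unitary_op (qm (nquery A)) (hd (nops A))" using un ne by simp
    have t: "\<forall>U\<in>set (tl (nops A)). unitary_op (qm (nquery A)) U" using un ne by (cases "nops A") auto
    show "\<forall>U\<in>set (nops (sim_nm \<kappa> ms \<eta> \<beta> \<rho> A)). unitary_op (qm (nquery (sim_nm \<kappa> ms \<eta> \<beta> \<rho> A))) U"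
      unfolding qmq using unitary_extm[OF h] chunk_unitary t by (auto simp: sim_nm_def)
  qed
  assume hyp: "\<forall>s. gt s = \<rho> s (map (\<lambda>j. \<beta> (f (\<eta> j s))) [0..<\<kappa>])"
  have "nmalg_op (sim_nm \<kappa> ms \<eta> \<beta> \<rho> A) f = run_ops N (query_op Q f) (extm m emb unemb (hd (nops A)))
     (concat (map (chunk \<kappa> ms (nquery A) \<rho>) (tl (nops A))))"
    using nm by (simp add: nmalg_op_def sim_nm_def)
  moreover have "nmalg_op A gt = run_ops m (query_op (nquery A) gt) (hd (nops A)) (tl (nops A))"
    by (simp add: nmalg_op_def nmalg_m_def)
  ultimately show "rep (qm (nquery A)) (NN \<kappa> ms (nquery A)) (embf \<kappa> ms (nquery A))
           (nmalg_op (sim_nm \<kappa> ms \<eta> \<beta> \<rho> A) f) (nmalg_op A gt)"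
    using concat_rep[OF rep_init hyp] by simp
qed


definition decx :: "nat \<Rightarrow> nat \<Rightarrow> ('dt,'kt,'g) qalg \<Rightarrow> nat list \<Rightarrow> nat list" where
  "decx \<kappa> ms At xs = map (\<lambda>i. unembf \<kappa> ms (nquery (fst (qsteps At ! i))) (xs ! i)) [0..<length xs]"

definition embx :: "nat \<Rightarrow> nat \<Rightarrow> ('dt,'kt,'g) qalg \<Rightarrow> nat list \<Rightarrow> nat list" where
  "embx \<kappa> ms At xs = map (\<lambda>i. embf \<kappa> ms (nquery (fst (qsteps At ! i))) (xs ! i)) [0..<length xs]"

definition sim_qa :: "nat \<Rightarrow> nat \<Rightarrow> (nat \<Rightarrow> 'dt \<Rightarrow> 'd) \<Rightarrow> ('k \<Rightarrow> nat) \<Rightarrow> ('dt \<Rightarrow> nat list \<Rightarrow> 'kt)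
    \<Rightarrow> ('dt,'kt,'g) qalg \<Rightarrow> ('d,'k,'g) qalg" where
  "sim_qa \<kappa> ms \<eta> \<beta> \<rho> At = \<lparr>qsteps = map (\<lambda>l. (sim_nm \<kappa> ms \<eta> \<beta> \<rho> (fst (qsteps At ! l)),
        \<lambda>xs. embf \<kappa> ms (nquery (fst (qsteps At ! l))) (snd (qsteps At ! l) (decx \<kappa> ms At xs))))
      [0..<length (qsteps At)],
     qphi = \<lambda>xs. qphi At (decx \<kappa> ms At xs)\<rparr>"

lemma finite_outcomes: "finite (outcomes A l)"
proof -
  define B where "B = (\<Sum>i<l. (2::nat) ^ qalg_mm A i)"
  have "outcomes A l \<subseteq> {xs. set xs \<subseteq> {..<B} \<and> length xs = l}"
  proof
    fix xs assume xs: "xs \<in> outcomes A l"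
    have "\<forall>x\<in>set xs. x < B"
    proof
      fix x assume "x \<in> set xs"
      then obtain i where i: "i < length xs" "x = xs ! i" by (auto simp: in_set_conv_nth)
      then have "x < 2 ^ qalg_mm A i" "i < l" using xs by (auto simp: outcomes_def)
      moreover have "2 ^ qalg_mm A i \<le> B" unfolding B_def using \<open>i < l\<close>
        by (intro member_le_sum) auto
      ultimately show "x < B" by linarith
    qed
    then show "xs \<in> {xs. set xs \<subseteq> {..<B} \<and> length xs = l}" using xs by (auto simp: outcomes_def)
  qed
  moreover have "finite {xs. set xs \<subseteq> {..<B} \<and> length xs = l}" by (rule finite_lists_length_eq) simp
  ultimately show ?thesis by (rule finite_subset)
qed

locale qsim =
  fixes \<kappa> ms :: nat and \<eta> :: "nat \<Rightarrow> 'dt \<Rightarrow> 'd" and \<beta> :: "'k \<Rightarrow> nat"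
    and \<rho> :: "'dt \<Rightarrow> nat list \<Rightarrow> 'kt" and At :: "('dt,'kt,'g) qalg"
  assumes kpos: "\<kappa> \<ge> 1" and mspos: "ms \<ge> 1" and \<beta>lt: "\<forall>k. \<beta> k < 2^ms" and AV: "qalg_valid At"
begin

abbreviation "k \<equiv> qalg_k At"
abbreviation "St l \<equiv> fst (qsteps At ! l)"
abbreviation "bt l \<equiv> snd (qsteps At ! l)"
abbreviation "Qs l \<equiv> nquery (St l)"
abbreviation "A \<equiv> sim_qa \<kappa> ms \<eta> \<beta> \<rho> At"
abbreviation "ml l \<equiv> qm (Qs l)"
abbreviation "embl l \<equiv> embf \<kappa> ms (Qs l)"
abbreviation "unembl l \<equiv> unembf \<kappa> ms (Qs l)"

lemma St_valid: "l < k \<Longrightarrow> nmalg_valid (St l)"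
  using AV by (simp add: qalg_valid_def)

lemma kA: "qalg_k A = k"
  by (simp add: qalg_k_def sim_qa_def)

lemma stepA: "l < k \<Longrightarrow> qsteps A ! l = (sim_nm \<kappa> ms \<eta> \<beta> \<rho> (St l), \<lambda>xs. embl l (bt l (decx \<kappa> ms At xs)))"
  by (simp add: sim_qa_def qalg_k_def)

lemma mmA: "l < k \<Longrightarrow> qalg_mm A l = NN \<kappa> ms (Qs l)"
  using stepA sim_nm_facts(3)[OF kpos mspos \<beta>lt St_valid] by (simp add: qalg_mm_def)

lemma mmAt: "qalg_mm At l = ml l"
  by (simp add: qalg_mm_def nmalg_m_def)

lemma ectx: "l < k \<Longrightarrow> emb_ctx (ml l) (NN \<kappa> ms (Qs l)) (embl l) (unembl l)"
  using sim_nm_facts(4)[OF kpos mspos \<beta>lt St_valid] by blast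

lemma unembl_lt: "l < k \<Longrightarrow> unembl l n < 2^ml l"
  using sim_nm_facts(5)[OF kpos mspos \<beta>lt St_valid] by blast

lemma decx_out: "length xs = j \<Longrightarrow> j \<le> k \<Longrightarrow> decx \<kappa> ms At xs \<in> outcomes At j"
  using unembl_lt by (auto simp: outcomes_def decx_def mmAt)

lemma embx_out: "xs \<in> outcomes At j \<Longrightarrow> j \<le> k \<Longrightarrow> embx \<kappa> ms At xs \<in> outcomes A j"
  using emb_ctx.emb_lt[OF ectx] by (auto simp: outcomes_def embx_def mmA mmAt)

lemma dec_emb: "xs \<in> outcomes At j \<Longrightarrow> j \<le> k \<Longrightarrow> decx \<kappa> ms At (embx \<kappa> ms At xs) = xs"
  using emb_ctx.unemb_emb[OF ectx] by (intro nth_equalityI) (auto simp: outcomes_def embx_def decx_def mmAt)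

lemma decx_take: "decx \<kappa> ms At (take l xs) = take l (decx \<kappa> ms At xs)"
  by (intro nth_equalityI) (auto simp: decx_def)

lemma embx_nth: "i < length xs \<Longrightarrow> embx \<kappa> ms At xs ! i = embl i (xs ! i)"
  by (simp add: embx_def)

lemma valid_A: "qalg_valid A"
  unfolding qalg_valid_def
proof (intro conjI allI impI ballI)
  show "1 \<le> qalg_k A" using AV kA by (simp add: qalg_valid_def)
next
  fix l assume "l < qalg_k A"
  then have l: "l < k" using kA by simp
  show "nmalg_valid (fst (qsteps A ! l))"
    using stepA[OF l] sim_nm_facts(1)[OF kpos mspos \<beta>lt St_valid[OF l]] by simp
next
  fix l xs assume l': "l < qalg_k A" and xs: "xs \<in> outcomes A l"
  then have l: "l < k" using kA by simp
  have "decx \<kappa> ms At xs \<in> outcomes At l" using xs l by (intro decx_out) (auto simp: outcomes_def)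
  then have "bt l (decx \<kappa> ms At xs) < 2 ^ ml l" using AV l by (auto simp: qalg_valid_def mmAt)
  then have "embl l (bt l (decx \<kappa> ms At xs)) < 2 ^ NN \<kappa> ms (Qs l)"
    using emb_ctx.emb_lt[OF ectx[OF l]] by blast
  then show "snd (qsteps A ! l) xs < 2 ^ qalg_mm A l" using stepA[OF l] mmA[OF l] by simp
qed

lemma nq_A: "qalg_nq A = 2 * \<kappa> * qalg_nq At"
proof -
  have "qalg_nq A = (\<Sum>l<k. nmalg_nq (fst (qsteps A ! l)))" by (simp add: qalg_nq_def kA)
  also have "\<dots> = (\<Sum>l<k. 2 * \<kappa> * nmalg_nq (St l))"
    using stepA sim_nm_facts(2)[OF kpos mspos \<beta>lt St_valid] by (intro sum.cong) auto
  also have "\<dots> = 2 * \<kappa> * qalg_nq At" by (simp add: qalg_nq_def sum_distrib_left)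
  finally show ?thesis .
qed

lemma out_A:
  assumes hyp: "\<forall>s. gt s = \<rho> s (map (\<lambda>j. \<beta> (f (\<eta> j s))) [0..<\<kappa>])"
  shows "qalg_out A f = qalg_out At gt"
proof
  fix C
  have R: "rep (ml l) (NN \<kappa> ms (Qs l)) (embl l) (nmalg_op (sim_nm \<kappa> ms \<eta> \<beta> \<rho> (St l)) f) (nmalg_op (St l) gt)"
    if "l < k" for l
    using sim_nm_facts(6)[where \<kappa>=\<kappa> and ms=ms and \<eta>=\<eta> and \<beta>=\<beta> and \<rho>=\<rho> and A="St l" and gt=gt and f=f,
      OF kpos mspos \<beta>lt St_valid[OF that] hyp] .
  let ?h = "\<lambda>xs'. if qphi A xs' \<in> C then outcome_prob A f xs' else 0"
  have opA: "outcome_prob A f xs' = (\<Prod>l<k. (cmod (nmalg_op (sim_nm \<kappa> ms \<eta> \<beta> \<rho> (St l)) f (xs' ! l)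
       (embl l (bt l (decx \<kappa> ms At (take l xs'))))))\<^sup>2)" for xs'
    unfolding outcome_prob_def kA using stepA by (intro prod.cong) auto
  have zero: "?h xs' = 0" if xs': "xs' \<in> outcomes A k" "xs' \<notin> embx \<kappa> ms At ` outcomes At k" for xs'
  proof -
    have lx: "length xs' = k" using xs' by (simp add: outcomes_def kA)
    have "\<exists>l<k. xs' ! l \<notin> embl l ` {..<2^ml l}"
    proof (rule ccontr)
      assume "\<not> (\<exists>l<k. xs' ! l \<notin> embl l ` {..<2^ml l})"
      then have all: "\<forall>l<k. xs' ! l \<in> embl l ` {..<2^ml l}" by blast
      have d: "decx \<kappa> ms At xs' \<in> outcomes At k" using lx by (intro decx_out) auto
      have "embx \<kappa> ms At (decx \<kappa> ms At xs') = xs'"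
      proof (intro nth_equalityI)
        show "length (embx \<kappa> ms At (decx \<kappa> ms At xs')) = length xs'" by (simp add: embx_def decx_def)
        fix i assume "i < length (embx \<kappa> ms At (decx \<kappa> ms At xs'))"
        then have i: "i < k" using lx by (simp add: embx_def decx_def)
        obtain y where y: "y < 2^ml i" "xs' ! i = embl i y" using all i by auto
        have "unembl i (xs' ! i) = y" using y emb_ctx.unemb_emb[OF ectx[OF i]] by simp
        then show "embx \<kappa> ms At (decx \<kappa> ms At xs') ! i = xs' ! i"
          using i lx y by (simp add: embx_def decx_def)
      qed
      then show False using xs'(2) d by (metis image_eqI)
    qed
    then obtain l where l: "l < k" "xs' ! l \<notin> embl l ` {..<2^ml l}" by blast
    have a: "xs' ! l < 2 ^ NN \<kappa> ms (Qs l)" using xs' l mmA by (auto simp: outcomes_def kA)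
    have "decx \<kappa> ms At (take l xs') \<in> outcomes At l" using lx l by (intro decx_out) auto
    then have b: "bt l (decx \<kappa> ms At (take l xs')) < 2 ^ ml l" using AV l by (auto simp: qalg_valid_def mmAt)
    have "nmalg_op (sim_nm \<kappa> ms \<eta> \<beta> \<rho> (St l)) f (xs' ! l) (embl l (bt l (decx \<kappa> ms At (take l xs')))) = 0"
      using R[OF l(1)] a l(2) b unfolding rep_def by blast
    then have "outcome_prob A f xs' = 0" unfolding opA using l by (intro prod_zero) auto
    then show ?thesis by simp
  qed
  have inj: "inj_on (embx \<kappa> ms At) (outcomes At k)"
    by (metis dec_emb inj_onI order_refl)
  have emb_case: "?h (embx \<kappa> ms At xs) = (if qphi At xs \<in> C then outcome_prob At gt xs else 0)"
    if xs: "xs \<in> outcomes At k" for xs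
  proof -
    have lx: "length xs = k" using xs by (simp add: outcomes_def)
    have ph: "qphi A (embx \<kappa> ms At xs) = qphi At xs" using dec_emb[OF xs] by (simp add: sim_qa_def)
    have eq: "(cmod (nmalg_op (sim_nm \<kappa> ms \<eta> \<beta> \<rho> (St l)) f (embx \<kappa> ms At xs ! l)
         (embl l (bt l (decx \<kappa> ms At (take l (embx \<kappa> ms At xs)))))))\<^sup>2
         = (cmod (nmalg_op (fst (qsteps At ! l)) gt (xs ! l) (snd (qsteps At ! l) (take l xs))))\<^sup>2"
      if l: "l < k" for l
    proof -
      have tk: "decx \<kappa> ms At (take l (embx \<kappa> ms At xs)) = take l xs"
        using dec_emb[OF xs] by (simp add: decx_take)
      have x: "xs ! l < 2 ^ ml l" using xs l by (auto simp: outcomes_def mmAt)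
      have "take l xs \<in> outcomes At l" using xs l by (auto simp: outcomes_def)
      then have b: "bt l (take l xs) < 2 ^ ml l" using AV l by (auto simp: qalg_valid_def mmAt)
      have "nmalg_op (sim_nm \<kappa> ms \<eta> \<beta> \<rho> (St l)) f (embl l (xs ! l)) (embl l (bt l (take l xs)))
          = nmalg_op (St l) gt (xs ! l) (bt l (take l xs))"
        using R[OF l] x b unfolding rep_def by blast
      then show "(cmod (nmalg_op (sim_nm \<kappa> ms \<eta> \<beta> \<rho> (St l)) f (embx \<kappa> ms At xs ! l)
         (embl l (bt l (decx \<kappa> ms At (take l (embx \<kappa> ms At xs)))))))\<^sup>2
         = (cmod (nmalg_op (fst (qsteps At ! l)) gt (xs ! l) (snd (qsteps At ! l) (take l xs))))\<^sup>2"
        using tk embx_nth[of l xs] lx l by simp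
    qed
    have "outcome_prob A f (embx \<kappa> ms At xs) = outcome_prob At gt xs"
      unfolding opA unfolding outcome_prob_def using eq by (intro prod.cong) auto
    then show ?thesis using ph by simp
  qed
  have "qalg_out A f C = (\<Sum>xs'\<in>outcomes A k. ?h xs')" by (simp add: qalg_out_def kA)
  also have "\<dots> = (\<Sum>xs'\<in>embx \<kappa> ms At ` outcomes At k. ?h xs')"
  proof (rule sum.mono_neutral_right)
    show "finite (outcomes A k)" by (rule finite_outcomes)
    show "embx \<kappa> ms At ` outcomes At k \<subseteq> outcomes A k" using embx_out by auto
    show "\<forall>xs'\<in>outcomes A k - embx \<kappa> ms At ` outcomes At k. ?h xs' = 0" using zero by blast
  qed
  also have "\<dots> = (\<Sum>xs\<in>outcomes At k. ?h (embx \<kappa> ms At xs))"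
    using inj by (simp add: sum.reindex)
  also have "\<dots> = (\<Sum>xs\<in>outcomes At k. if qphi At xs \<in> C then outcome_prob At gt xs else 0)"
    using emb_case by (intro sum.cong) auto
  also have "\<dots> = qalg_out At gt C" by (simp add: qalg_out_def)
  finally show "qalg_out A f C = qalg_out At gt C" .
qed

end


theorem corollary1:
  fixes F :: "('d \<Rightarrow> 'k) set" and Ft :: "('dt \<Rightarrow> 'kt) set"
    and \<Gamma> :: "('d \<Rightarrow> 'k) \<Rightarrow> ('dt \<Rightarrow> 'kt)"
    and \<kappa> mstar :: nat
    and \<eta> :: "nat \<Rightarrow> 'dt \<Rightarrow> 'd" and \<beta> :: "'k \<Rightarrow> nat" and \<rho> :: "'dt \<Rightarrow> nat list \<Rightarrow> 'kt"
  assumes "F \<noteq> {}" and "Ft \<noteq> {}" and "\<Gamma> ` F \<subseteq> Ft"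
    and "\<kappa> \<ge> 1" and "mstar \<ge> 1"
    and "\<forall>k. \<beta> k < 2 ^ mstar"
    and "\<forall>f\<in>F. \<forall>s. \<Gamma> f s = \<rho> s (map (\<lambda>j. \<beta> (f (\<eta> j s))) [0..<\<kappa>])"
  shows "(\<forall>At :: ('dt, 'kt, 'g::real_normed_vector) qalg. qalg_valid At \<longrightarrow>
            (\<exists>A :: ('d, 'k, 'g) qalg. qalg_valid A \<and> qalg_nq A = 2 * \<kappa> * qalg_nq At
               \<and> (\<forall>f\<in>F. qalg_out A f = qalg_out At (\<Gamma> f))))
       \<and> (\<forall>(St :: ('dt \<Rightarrow> 'kt) \<Rightarrow> 'g) n. qerr (2 * \<kappa> * n) (St \<circ> \<Gamma>) F \<le> qerr n St Ft)"
proof -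
  have part1: "\<forall>At :: ('dt, 'kt, 'g) qalg. qalg_valid At \<longrightarrow>
            (\<exists>A :: ('d, 'k, 'g) qalg. qalg_valid A \<and> qalg_nq A = 2 * \<kappa> * qalg_nq At
               \<and> (\<forall>f\<in>F. qalg_out A f = qalg_out At (\<Gamma> f)))"
  proof (intro allI impI)
    fix At :: "('dt, 'kt, 'g) qalg" assume AV: "qalg_valid At"
    interpret qsim \<kappa> mstar \<eta> \<beta> \<rho> At
      using assms(4-6) AV by unfold_locales auto
    have "qalg_valid A \<and> qalg_nq A = 2 * \<kappa> * qalg_nq At \<and> (\<forall>f\<in>F. qalg_out A f = qalg_out At (\<Gamma> f))"
    proof (intro conjI ballI)
      show "qalg_valid A" by (rule valid_A)
      show "qalg_nq A = 2 * \<kappa> * qalg_nq At" by (rule nq_A)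
      fix f assume "f \<in> F"
      then show "qalg_out A f = qalg_out At (\<Gamma> f)" using assms(7) by (intro out_A) auto
    qed
    then show "\<exists>A :: ('d, 'k, 'g) qalg. qalg_valid A \<and> qalg_nq A = 2 * \<kappa> * qalg_nq At
               \<and> (\<forall>f\<in>F. qalg_out A f = qalg_out At (\<Gamma> f))" by blast
  qed
  have part2: "qerr (2 * \<kappa> * n) (St \<circ> \<Gamma>) F \<le> qerr n St Ft" for St :: "('dt \<Rightarrow> 'kt) \<Rightarrow> 'g" and n
    unfolding qerr_def eq_theta_def
  proof (rule INF_greatest)
    fix At :: "('dt, 'kt, 'g) qalg" assume "At \<in> {A. qalg_valid A \<and> qalg_nq A \<le> n}"
    then have AV: "qalg_valid At" and nq: "qalg_nq At \<le> n" by auto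
    obtain A :: "('d, 'k, 'g) qalg" where A: "qalg_valid A" "qalg_nq A = 2 * \<kappa> * qalg_nq At"
      "\<forall>f\<in>F. qalg_out A f = qalg_out At (\<Gamma> f)"
      using part1 AV by blast
    have "qalg_nq A \<le> 2 * \<kappa> * n" using A(2) nq by simp
    then have mem: "A \<in> {A. qalg_valid A \<and> qalg_nq A \<le> 2 * \<kappa> * n}" using A(1) by simp
    have "(INF A\<in>{A. qalg_valid A \<and> qalg_nq A \<le> 2 * \<kappa> * n}. err (St \<circ> \<Gamma>) A F (1/4)) \<le> err (St \<circ> \<Gamma>) A F (1/4)"
      using mem by (rule INF_lower)
    also have "\<dots> = (SUP f\<in>F. err_pt St At (\<Gamma> f) (1/4))"
      unfolding err_def using A(3) by (intro SUP_cong refl) (simp add: err_pt_def)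
    also have "\<dots> \<le> (SUP f\<in>Ft. err_pt St At f (1/4))"
      using assms(3) by (intro SUP_mono) auto
    also have "\<dots> = err St At Ft (1/4)" by (simp add: err_def)
    finally show "(INF A\<in>{A. qalg_valid A \<and> qalg_nq A \<le> 2 * \<kappa> * n}. err (St \<circ> \<Gamma>) A F (1/4)) \<le> err St At Ft (1/4)" .
  qed
  show ?thesis using part1 part2 by blast
qed


end
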